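(* Let Assumption 1 hold with some $\delta\in(0,1]$. Let $A\ge1$, define $\alpha$ by $$\alpha=2L\Big\{1-\Phi\big(A\sqrt{2\log L}\big)\Big\}+2A_0\frac{\big(1+A\sqrt{2\log L}\big)^{1+\delta}}{L^{A^2-1}d_{n,\delta}^{2+\delta}},$$ set $r=A\sqrt{2\log(L)/n}$, and assume $L\le\exp(d_{n,\delta}^2/(2A^2))$. Then with probability at least $1-\alpha$, every solution $(\widehat\beta,\widehat\sigma)$ of the STIV problem (with this $r$ and constant $c\in(0,1)$) satisfies, for all $p\in[1,\infty]$, $$\big|{\bf D_X}^{-1}(\widehat\beta-\beta^* )\big|_p\le\frac{2\widehat\sigma r}{\kappa_{p,J(\beta^* )}}\left(1-\frac{r}{\kappa^*_{J_{\rm end},J(\beta^* )}}-\frac{r^2}{\kappa^*_{J_{\rm end}^c,J(\beta^* )}}\right)_+^{-1},$$ for all $k=1,\dots,K$, $$|\widehat\beta_k-\beta^*_k|\le\frac{2\widehat\sigma r}{x_{k*}\kappa^*_{k,J(\beta^* )}}\left(1-\frac{r}{\kappa^*_{J_{\rm end},J(\beta^* )}}-\frac{r^2}{\kappa^*_{J_{\rm end}^c,J(\beta^* )}}\right)_+^{-1},$$ and $$\widehat\sigma\le\sqrt{\widehat Q(\beta^* )}\left(1+\frac{r}{c\,\kappa^*_{J(\beta^* ),J(\beta^* )}}\right)\left(1-\frac{r}{c\,\kappa^*_{J(\beta^* ),J(\beta^* )}}\right)_+^{-1}.$$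
   Context: Setting: integers $n,K,L$ with $L\ge K$, and $k_{\rm end}\in\{0,\dots,K\}$. For $i=1,\dots,n$ one observes $(y_i,x_i,z_i)$, $y_i\in\mathbb R$, $x_i=(x_{1i},\dots,x_{Ki})^T\in\mathbb R^K$, $z_i=(z_{1i},\dots,z_{Li})^T\in\mathbb R^L$, with $y_i=x_i^T\beta^*+u_i$ for an unknown $\beta^*\in\mathbb R^K$ and unobserved errors $u_i$; the vectors $(y_i,x_i,z_i,u_i)$, $i=1,\dots,n$, are mutually independent (not necessarily identically distributed). $J_{\rm end}=\{1,\dots,k_{\rm end}\}$ (endogenous regressors), $J_{\rm end}^c=\{k_{\rm end}+1,\dots,K\}$, and exogenous regressors are their own instruments: $z_{li}=x_{(k_{\rm end}+l)i}$ for $l=1,\dots,K-k_{\rm end}$. ${\bf Y}=(y_1,\dots,y_n)^T$, ${\bf X}$, ${\bf Z}$ are the $n\times K$, $n\times L$ matrices with rows $x_i^T$, $z_i^T$. $x_{k*}=\max_i|x_{ki}|$, $z_{l*}=\max_i|z_{li}|$ (assumed positive); ${\bf D_X}={\rm diag}(x_{1*}^{-1},\dots,x_{K*}^{-1})$, ${\bf D_Z}={\rm diag}(z_{1*}^{-1},\dots,z_{L*}^{-1})$; $\Psi_n=\frac1n{\bf D_Z}{\bf Z}^T{\bf X}{\bf D_X}$. $\widehat Q(\beta)=\frac1n\sum_i(y_i-x_i^T\beta)^2$. Notation: $J(\beta)=\{k:\beta_k\ne0\}$; for $\Delta\in\mathbb R^K$, $\Delta_J$ has coordinates $\Delta_k\mathbf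 1\{k\in J\}$; $J^c$ complement; $|\cdot|_p$ the $\ell_p$ norm; $a_+=\max(a,0)$, $(a)_+^{-1}=1/a_+$, $a/0=\infty$ for $a>0$, $1/\infty=0$, $0/0=0$. Sensitivities (for $c\in(0,1)$): $C_J=\{\Delta: |\Delta_{J^c}|_1\le\frac{1+c}{1-c}|\Delta_J|_1\}$; $\kappa_{p,J}=\inf\{|\Psi_n\Delta|_\infty:\Delta\in C_J,|\Delta|_p=1\}$; $\kappa^*_{J_0,J}=\inf\{|\Psi_n\Delta|_\infty:\Delta\in C_J,|\Delta_{J_0}|_1=1\}$ with $\kappa^*_{\varnothing,J}=\infty$; $\kappa^*_{k,J}=\kappa^*_{\{k\},J}$. STIV estimator: for $r>0$ and $c\in(0,1)$, let $\widehat{\mathcal I}=\{(\beta,\sigma)\in\mathbb R^K\times(0,\infty): |\frac1n{\bf D_Z}{\bf Z}^T({\bf Y}-{\bf X}\beta)|_\infty\le\sigma r,\ \widehat Q(\beta)\le\sigma^2\}$; a STIV estimator is any minimizer $(\widehat\beta,\widehat\sigma)$ of $|{\bf D_X}^{-1}\beta|_1+c\sigma$ over $\widehat{\mathcal I}$. Assumption 1: for all $i,l$: $\mathbb E[|z_{li}u_i|^{2+\delta}]<\infty$, $\mathbb E[z_{li}u_i]=0$, and $z_{li}u_i$ is not a.s. zero. $d_{n,\delta}=\min_{l}\sqrt{\sum_i\mathbb E[z_{li}^2u_i^2]}\big/\big(\sum_i\mathbb E|z_{li}u_i|^{2+\delta}\big)^{1/(2+\delta)}$. $\Phi$ is the standard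 normal c.d.f., and $A_0>0$ is the absolute constant of the Jing–Shao–Wang moderate deviation bound: for independent mean-zero $X_1,\dots,X_n$ with $0<\mathbb E|X_i|^{2+\delta}<\infty$, $S_n=\sum X_i$, $V_n^2=\sum X_i^2$, $B_n^2=\sum\mathbb E X_i^2$, $d=B_n/(\sum\mathbb E|X_i|^{2+\delta})^{1/(2+\delta)}$, one has $|\mathbb P(S_n/V_n\ge x)-(1-\Phi(x))|\le A_0(1+x)^{1+\delta}e^{-x^2/2}/d^{2+\delta}$ for $0\le x\le d$. *)

theory Defs
  imports "HOL-Probability.Probability"
begin

definition Phi :: "real \<Rightarrow> real" where
  "Phi x = measure (density lborel std_normal_density) {..x}"

text \<open>Vectors are functions nat => real, only coordinates in the relevant index
  range {1..K} (resp. {1..L}, {1..n}) matter.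
  Data at a fixed sample point: Y i = y_i, X k i = x_{ki}, Z l i = z_{li}.\<close>

definition supnorm :: "nat set \<Rightarrow> (nat \<Rightarrow> real) \<Rightarrow> real" where
  "supnorm S f = Max (insert 0 ((\<lambda>k. \<bar>f k\<bar>) ` S))"

definition l1norm :: "nat set \<Rightarrow> (nat \<Rightarrow> real) \<Rightarrow> real" where
  "l1norm S f = (\<Sum>k\<in>S. \<bar>f k\<bar>)"

definition lpnorm :: "nat \<Rightarrow> ereal \<Rightarrow> (nat \<Rightarrow> real) \<Rightarrow> real" where
  "lpnorm K p f = (if p = \<infinity> then supnorm {1..K} f
     else (\<Sum>k\<in>{1..K}. \<bar>f k\<bar> powr real_of_ereal p) powr (1 / real_of_ereal p))"

definition restr :: "nat set \<Rightarrow> (nat \<Rightarrow> real) \<Rightarrow> (nat \<Rightarrow> real)" where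
  "restr J f = (\<lambda>k. if k \<in> J then f k else 0)"

definition xstar :: "nat \<Rightarrow> (nat \<Rightarrow> nat \<Rightarrow> real) \<Rightarrow> nat \<Rightarrow> real" where
  "xstar n X k = Max ((\<lambda>i. \<bar>X k i\<bar>) ` {1..n})"

definition zstar :: "nat \<Rightarrow> (nat \<Rightarrow> nat \<Rightarrow> real) \<Rightarrow> nat \<Rightarrow> real" where
  "zstar n Z l = Max ((\<lambda>i. \<bar>Z l i\<bar>) ` {1..n})"

definition supp :: "nat \<Rightarrow> (nat \<Rightarrow> real) \<Rightarrow> nat set" where
  "supp K b = {k \<in> {1..K}. b k \<noteq> 0}"

definition Psi_app :: "nat \<Rightarrow> nat \<Rightarrow> (nat \<Rightarrow> nat \<Rightarrow> real) \<Rightarrow> (nat \<Rightarrow> nat \<Rightarrow> real)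
    \<Rightarrow> (nat \<Rightarrow> real) \<Rightarrow> (nat \<Rightarrow> real)" where
  "Psi_app n K X Z D = (\<lambda>l. (1 / real n) * (\<Sum>i\<in>{1..n}. (Z l i / zstar n Z l) *
       (\<Sum>k\<in>{1..K}. X k i * D k / xstar n X k)))"

definition cone :: "nat \<Rightarrow> real \<Rightarrow> nat set \<Rightarrow> (nat \<Rightarrow> real) set" where
  "cone K c J = {D. l1norm ({1..K} - J) D \<le> (1 + c) / (1 - c) * l1norm J D}"

text \<open>kappa_{p,J}; the infimum is taken in the extended reals (inf of empty set = infinity)\<close>
definition kappa_p :: "nat \<Rightarrow> nat \<Rightarrow> nat \<Rightarrow> (nat \<Rightarrow> nat \<Rightarrow> real) \<Rightarrow> (nat \<Rightarrow> nat \<Rightarrow> real)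
    \<Rightarrow> real \<Rightarrow> ereal \<Rightarrow> nat set \<Rightarrow> ereal" where
  "kappa_p n K L X Z c p J = (
     Inf ((\<lambda>D. ereal (supnorm {1..L} (Psi_app n K X Z D))) `
          {D \<in> cone K c J. lpnorm K p D = 1}))"

definition kappa_star :: "nat \<Rightarrow> nat \<Rightarrow> nat \<Rightarrow> (nat \<Rightarrow> nat \<Rightarrow> real) \<Rightarrow> (nat \<Rightarrow> nat \<Rightarrow> real)
    \<Rightarrow> real \<Rightarrow> nat set \<Rightarrow> nat set \<Rightarrow> ereal" where
  "kappa_star n K L X Z c J0 J = (if J0 = {} then \<infinity> else
     Inf ((\<lambda>D. ereal (supnorm {1..L} (Psi_app n K X Z D))) `
          {D \<in> cone K c J. l1norm J0 D = 1}))"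

definition Qhat :: "nat \<Rightarrow> nat \<Rightarrow> (nat \<Rightarrow> nat \<Rightarrow> real) \<Rightarrow> (nat \<Rightarrow> real) \<Rightarrow> (nat \<Rightarrow> real) \<Rightarrow> real" where
  "Qhat n K X Y b = (1 / real n) * (\<Sum>i\<in>{1..n}. (Y i - (\<Sum>k\<in>{1..K}. X k i * b k))\<^sup>2)"

definition stiv_feasible :: "nat \<Rightarrow> nat \<Rightarrow> nat \<Rightarrow> (nat \<Rightarrow> nat \<Rightarrow> real) \<Rightarrow> (nat \<Rightarrow> nat \<Rightarrow> real)
    \<Rightarrow> (nat \<Rightarrow> real) \<Rightarrow> real \<Rightarrow> (nat \<Rightarrow> real) \<Rightarrow> real \<Rightarrow> bool" where
  "stiv_feasible n K L X Z Y r b s \<longleftrightarrow> 0 < s \<and>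
     supnorm {1..L} (\<lambda>l. (1 / real n) * (\<Sum>i\<in>{1..n}. Z l i / zstar n Z l *
         (Y i - (\<Sum>k\<in>{1..K}. X k i * b k)))) \<le> s * r \<and>
     Qhat n K X Y b \<le> s\<^sup>2"

definition stiv_obj :: "nat \<Rightarrow> nat \<Rightarrow> (nat \<Rightarrow> nat \<Rightarrow> real) \<Rightarrow> real \<Rightarrow> (nat \<Rightarrow> real) \<Rightarrow> real \<Rightarrow> real" where
  "stiv_obj n K X c b s = (\<Sum>k\<in>{1..K}. xstar n X k * \<bar>b k\<bar>) + c * s"

definition stiv_solution :: "nat \<Rightarrow> nat \<Rightarrow> nat \<Rightarrow> (nat \<Rightarrow> nat \<Rightarrow> real) \<Rightarrow> (nat \<Rightarrow> nat \<Rightarrow> real)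
    \<Rightarrow> (nat \<Rightarrow> real) \<Rightarrow> real \<Rightarrow> real \<Rightarrow> (nat \<Rightarrow> real) \<Rightarrow> real \<Rightarrow> bool" where
  "stiv_solution n K L X Z Y r c b s \<longleftrightarrow> stiv_feasible n K L X Z Y r b s \<and>
     (\<forall>b' s'. stiv_feasible n K L X Z Y r b' s' \<longrightarrow> stiv_obj n K X c b s \<le> stiv_obj n K X c b' s')"

text \<open>a * (D)_+^{-1} for a \<ge> 0: equals infinity when D \<le> 0 (bound is void)\<close>
definition times_posinv :: "ereal \<Rightarrow> ereal \<Rightarrow> ereal" where
  "times_posinv a D = (if D \<le> 0 then \<infinity> else a / D)"

definition d_ndelta :: "'a measure \<Rightarrow> nat \<Rightarrow> nat \<Rightarrow> real \<Rightarrow> (nat \<Rightarrow> nat \<Rightarrow> 'a \<Rightarrow> real)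
    \<Rightarrow> (nat \<Rightarrow> 'a \<Rightarrow> real) \<Rightarrow> real" where
  "d_ndelta M n L \<delta> z u = Min ((\<lambda>l.
      sqrt (\<Sum>i\<in>{1..n}. integral\<^sup>L M (\<lambda>\<omega>. (z l i \<omega> * u i \<omega>)\<^sup>2)) /
      (\<Sum>i\<in>{1..n}. integral\<^sup>L M (\<lambda>\<omega>. \<bar>z l i \<omega> * u i \<omega>\<bar> powr (2 + \<delta>))) powr (1 / (2 + \<delta>)))
    ` {1..L})"

text \<open>A0 satisfies the Jing-Shao-Wang moderate deviation bound (for all families of
  independent random variables on the probability space M and all delta in (0,1]).\<close>
definition jsw_constant :: "'a measure \<Rightarrow> real \<Rightarrow> bool" where
  "jsw_constant M A0 \<longleftrightarrow> (\<forall>(N::nat) (Xs :: nat \<Rightarrow> 'a \<Rightarrow> real) (\<delta>::real).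
     (0 < \<delta> \<and> \<delta> \<le> 1 \<and> 1 \<le> N \<and>
      prob_space.indep_vars M (\<lambda>_. borel) Xs {1..N} \<and>
      (\<forall>i\<in>{1..N}. integrable M (\<lambda>\<omega>. \<bar>Xs i \<omega>\<bar> powr (2 + \<delta>)) \<and>
          0 < integral\<^sup>L M (\<lambda>\<omega>. \<bar>Xs i \<omega>\<bar> powr (2 + \<delta>)) \<and>
          integral\<^sup>L M (Xs i) = 0)) \<longrightarrow>
     (let S = (\<lambda>\<omega>. \<Sum>i\<in>{1..N}. Xs i \<omega>);
          V = (\<lambda>\<omega>. sqrt (\<Sum>i\<in>{1..N}. (Xs i \<omega>)\<^sup>2));
          B = sqrt (\<Sum>i\<in>{1..N}. integral\<^sup>L M (\<lambda>\<omega>. (Xs i \<omega>)\<^sup>2));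
          d = B / (\<Sum>i\<in>{1..N}. integral\<^sup>L M (\<lambda>\<omega>. \<bar>Xs i \<omega>\<bar> powr (2 + \<delta>))) powr (1 / (2 + \<delta>))
      in \<forall>x. 0 \<le> x \<and> x \<le> d \<longrightarrow>
           \<bar>measure M {\<omega> \<in> space M. S \<omega> / V \<omega> \<ge> x} - (1 - Phi x)\<bar>
             \<le> A0 * (1 + x) powr (1 + \<delta>) * exp (- x\<^sup>2 / 2) / d powr (2 + \<delta>)))"

end

theory Submission
  imports Defs
begin

lemma supnorm_nonneg: "finite S \<Longrightarrow> 0 \<le> supnorm S f"
  unfolding supnorm_def by (intro Max_ge) auto

lemma supnorm_ge: "finite S \<Longrightarrow> k \<in> S \<Longrightarrow> \<bar>f k\<bar> \<le> supnorm S f"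
  unfolding supnorm_def by (intro Max_ge) auto

lemma supnorm_le: "finite S \<Longrightarrow> 0 \<le> B \<Longrightarrow> (\<And>k. k \<in> S \<Longrightarrow> \<bar>f k\<bar> \<le> B) \<Longrightarrow> supnorm S f \<le> B"
  unfolding supnorm_def by (subst Max_le_iff) auto

lemma supnorm_scale: assumes "finite S" "0 \<le> t"
  shows "supnorm S (\<lambda>k. t * f k) = t * supnorm S f"
proof (rule antisym)
  show "supnorm S (\<lambda>k. t * f k) \<le> t * supnorm S f"
    using assms by (intro supnorm_le) (auto simp: abs_mult supnorm_nonneg intro!: mult_left_mono supnorm_ge)
next
  show "t * supnorm S f \<le> supnorm S (\<lambda>k. t * f k)"
  proof (cases "t = 0")
    case True then show ?thesis using assms by (simp add: supnorm_nonneg)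
  next
    case False
    then have tp: "t > 0" using assms by auto
    have "supnorm S f \<le> supnorm S (\<lambda>k. t * f k) / t"
      using assms tp by (intro supnorm_le) (auto simp: abs_mult supnorm_nonneg field_simps
          dest: supnorm_ge[where f="\<lambda>k. t * f k"])
    then show ?thesis using tp by (simp add: field_simps)
  qed
qed

lemma l1norm_nonneg: "0 \<le> l1norm S f"
  unfolding l1norm_def by (simp add: sum_nonneg)

lemma l1norm_scale: "0 \<le> t \<Longrightarrow> l1norm S (\<lambda>k. t * f k) = t * l1norm S f"
  unfolding l1norm_def by (simp add: abs_mult sum_distrib_left)

lemma lpnorm_nonneg: "0 \<le> lpnorm K p f"
  unfolding lpnorm_def by (simp add: supnorm_nonneg)

lemma lpnorm_scale: assumes "0 \<le> t" "1 \<le> p"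
  shows "lpnorm K p (\<lambda>k. t * f k) = t * lpnorm K p f"
proof (cases "p = \<infinity>")
  case True then show ?thesis using assms by (simp add: lpnorm_def supnorm_scale)
next
  case False
  define q where "q = real_of_ereal p"
  have q1: "1 \<le> q" using assms False unfolding q_def
    by (cases p) auto
  have "(\<Sum>k\<in>{1..K}. \<bar>t * f k\<bar> powr q) = t powr q * (\<Sum>k\<in>{1..K}. \<bar>f k\<bar> powr q)"
    using assms by (simp add: abs_mult powr_mult sum_distrib_left)
  moreover have "(t powr q * S) powr (1/q) = t * S powr (1/q)" if "0 \<le> S" for S
    using assms q1 that by (simp add: powr_mult powr_powr)
  ultimately show ?thesis using False unfolding lpnorm_def q_def[symmetric]
    by (simp add: sum_nonneg)
qed

lemma Psi_scale: "Psi_app n K X Z (\<lambda>k. t * D k) = (\<lambda>l. t * Psi_app n K X Z D l)"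
  unfolding Psi_app_def
  by (rule ext) (simp add: sum_distrib_left algebra_simps)

lemma cone_scale: assumes "D \<in> cone K c J" "0 \<le> t" shows "(\<lambda>k. t * D k) \<in> cone K c J"
proof -
  have "t * l1norm ({1..K} - J) D \<le> t * ((1 + c) / (1 - c) * l1norm J D)"
    using assms by (intro mult_left_mono) (auto simp: cone_def)
  then show ?thesis using assms by (simp add: cone_def l1norm_scale mult_ac)
qed


lemma kappa_star_nonneg: "0 \<le> kappa_star n K L X Z c J0 J"
  unfolding kappa_star_def by (auto intro!: Inf_greatest simp: supnorm_nonneg)

lemma kappa_p_nonneg: "0 \<le> kappa_p n K L X Z c p J"
  unfolding kappa_p_def by (auto intro!: Inf_greatest simp: supnorm_nonneg)

lemma kappa_star_bound:
  assumes D: "D \<in> cone K c J"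
  shows "kappa_star n K L X Z c J0 J * ereal (l1norm J0 D) \<le> ereal (supnorm {1..L} (Psi_app n K X Z D))"
proof -
  define a where "a = l1norm J0 D"
  have P0: "0 \<le> supnorm {1..L} (Psi_app n K X Z D)" by (simp add: supnorm_nonneg)
  show ?thesis
  proof (cases "a = 0")
    case True then show ?thesis using P0 by (simp add: a_def[symmetric] zero_ereal_def[symmetric])
  next
    case False
    then have ap: "a > 0" using l1norm_nonneg[of J0 D] a_def by auto
    then have J0ne: "J0 \<noteq> {}" using a_def by (auto simp: l1norm_def)
    define D' where "D' = (\<lambda>k. (1/a) * D k)"
    have "D' \<in> cone K c J" unfolding D'_def using D ap by (intro cone_scale) auto
    moreover have "l1norm J0 D' = 1" unfolding D'_def using ap l1norm_scale[of "1/a" J0 D] by (simp add: a_def)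
    ultimately have "kappa_star n K L X Z c J0 J \<le> ereal (supnorm {1..L} (Psi_app n K X Z D'))"
      unfolding kappa_star_def using J0ne by (auto intro!: Inf_lower)
    also have "supnorm {1..L} (Psi_app n K X Z D') = (1/a) * supnorm {1..L} (Psi_app n K X Z D)"
      unfolding D'_def Psi_scale using ap supnorm_scale[of "{1..L}" "1/a" "Psi_app n K X Z D"] by simp
    finally have "kappa_star n K L X Z c J0 J * ereal a \<le> ereal ((1/a) * supnorm {1..L} (Psi_app n K X Z D)) * ereal a"
      using ap by (intro ereal_mult_right_mono) auto
    then show ?thesis using ap by (simp add: a_def[symmetric])
  qed
qed

lemma kappa_p_bound:
  assumes D: "D \<in> cone K c J" and p: "1 \<le> p"
  shows "kappa_p n K L X Z c p J * ereal (lpnorm K p D) \<le> ereal (supnorm {1..L} (Psi_app n K X Z D))"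
proof -
  define a where "a = lpnorm K p D"
  have P0: "0 \<le> supnorm {1..L} (Psi_app n K X Z D)" by (simp add: supnorm_nonneg)
  show ?thesis
  proof (cases "a = 0")
    case True then show ?thesis using P0 by (simp add: a_def[symmetric] zero_ereal_def[symmetric])
  next
    case False
    then have ap: "a > 0" using lpnorm_nonneg[of K p D] a_def by auto
    define D' where "D' = (\<lambda>k. (1/a) * D k)"
    have "D' \<in> cone K c J" unfolding D'_def using D ap by (intro cone_scale) auto
    moreover have "lpnorm K p D' = 1" unfolding D'_def using ap p lpnorm_scale[of "1/a" p K D] by (simp add: a_def)
    ultimately have "kappa_p n K L X Z c p J \<le> ereal (supnorm {1..L} (Psi_app n K X Z D'))"
      unfolding kappa_p_def by (auto intro!: Inf_lower)
    also have "supnorm {1..L} (Psi_app n K X Z D') = (1/a) * supnorm {1..L} (Psi_app n K X Z D)"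
      unfolding D'_def Psi_scale using ap supnorm_scale[of "{1..L}" "1/a" "Psi_app n K X Z D"] by simp
    finally have "kappa_p n K L X Z c p J * ereal a \<le> ereal ((1/a) * supnorm {1..L} (Psi_app n K X Z D)) * ereal a"
      using ap by (intro ereal_mult_right_mono) auto
    then show ?thesis using ap by (simp add: a_def[symmetric])
  qed
qed

lemma ereal_E1:
  fixes \<kappa> :: ereal
  assumes "0 < \<rho>" "0 \<le> \<kappa>" "\<kappa> * ereal v \<le> ereal P" "0 \<le> v" "ereal \<rho> / \<kappa> \<noteq> \<infinity>"
  shows "\<rho> * v \<le> real_of_ereal (ereal \<rho> / \<kappa>) * P" "0 \<le> real_of_ereal (ereal \<rho> / \<kappa>)"
proof -
  have "\<rho> * v \<le> real_of_ereal (ereal \<rho> / \<kappa>) * P \<and> 0 \<le> real_of_ereal (ereal \<rho> / \<kappa>)"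
  proof (cases \<kappa>)
    case (real k)
    then have k0: "k \<ge> 0" using assms by auto
    show ?thesis
    proof (cases "k = 0")
      case True then show ?thesis using assms real by (simp add: divide_ereal_def)
    next
      case False
      then have kp: "k > 0" using k0 by auto
      then have "ereal \<rho> / \<kappa> = ereal (\<rho> / k)" using real by simp
      moreover have "k * v \<le> P" using assms real by simp
      then have "\<rho> * v \<le> (\<rho> / k) * P" using kp assms
        by (simp add: field_simps)
      ultimately show ?thesis using kp assms by simp
    qed
  next
    case PInf
    then have "v = 0" using assms by (cases "v = 0") auto
    then show ?thesis using PInf by simp
  next
    case MInf then show ?thesis using assms by simp
  qed
  then show "\<rho> * v \<le> real_of_ereal (ereal \<rho> / \<kappa>) * P" "0 \<le> real_of_ereal (ereal \<rho> / \<kappa>)" by auto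
qed

lemma ereal_E2:
  fixes \<kappa> :: ereal
  assumes "0 \<le> \<kappa>" "\<kappa> * ereal v \<le> ereal P" "0 \<le> v" "P \<le> N / D" "0 < D" "0 < N"
  shows "ereal v \<le> (ereal N / \<kappa>) / ereal D"
proof (cases \<kappa>)
  case (real k)
  then have k0: "k \<ge> 0" using assms by auto
  show ?thesis
  proof (cases "k = 0")
    case True then show ?thesis using assms real by (simp add: divide_ereal_def)
  next
    case False
    then have kp: "k > 0" using k0 by auto
    have "k * v \<le> P" using assms real by simp
    then have "v \<le> P / k" using kp by (simp add: field_simps mult.commute)
    also have "\<dots> \<le> (N / D) / k" using assms kp by (intro divide_right_mono) auto
    finally show ?thesis using kp assms real by (simp add: field_simps)
  qed
next
  case PInf
  then have "v = 0" using assms by (cases "v = 0") auto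
  then show ?thesis using PInf assms by simp
next
  case MInf then show ?thesis using assms by simp
qed


lemma cs_sum:
  fixes a b :: "nat \<Rightarrow> real"
  shows "(\<Sum>i\<in>I. a i * b i) \<le> sqrt (\<Sum>i\<in>I. (a i)\<^sup>2) * sqrt (\<Sum>i\<in>I. (b i)\<^sup>2)"
proof -
  have "(\<Sum>i\<in>I. a i * b i) \<le> sqrt ((\<Sum>i\<in>I. a i * b i)\<^sup>2)" by simp
  also have "\<dots> \<le> sqrt ((\<Sum>i\<in>I. (a i)\<^sup>2) * (\<Sum>i\<in>I. (b i)\<^sup>2))"
    by (intro real_sqrt_le_mono Cauchy_Schwarz_ineq_sum)
  finally show ?thesis by (simp add: real_sqrt_mult)
qed

lemma ereal_div_nonneg: "0 < r \<Longrightarrow> 0 \<le> (\<kappa>::ereal) \<Longrightarrow> 0 \<le> ereal r / \<kappa>"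
  by (cases \<kappa>) (auto simp: divide_ereal_def)

lemma ereal_Dn:
  fixes a1 a2 :: ereal
  assumes "0 \<le> a1" "0 \<le> a2" "\<not> (1 - a1 - a2 \<le> 0)"
  shows "a1 = ereal (real_of_ereal a1)" "a2 = ereal (real_of_ereal a2)"
    "1 - a1 - a2 = ereal (1 - real_of_ereal a1 - real_of_ereal a2)"
    "real_of_ereal a1 + real_of_ereal a2 < 1"
proof -
  have "a1 = ereal (real_of_ereal a1) \<and> a2 = ereal (real_of_ereal a2) \<and>
    1 - a1 - a2 = ereal (1 - real_of_ereal a1 - real_of_ereal a2) \<and>
    real_of_ereal a1 + real_of_ereal a2 < 1"
    using assms by (cases a1; cases a2) (auto simp: one_ereal_def)
  then show "a1 = ereal (real_of_ereal a1)" "a2 = ereal (real_of_ereal a2)"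
    "1 - a1 - a2 = ereal (1 - real_of_ereal a1 - real_of_ereal a2)"
    "real_of_ereal a1 + real_of_ereal a2 < 1" by auto
qed

lemma ereal_div_c: "0 < c \<Longrightarrow> 0 < r \<Longrightarrow> ereal r / (ereal c * \<kappa>) = ereal (r / c) / \<kappa>"
  by (cases \<kappa>) (auto simp: divide_ereal_def field_simps)


lemma det_core:
  fixes n K L kend :: nat and X Z :: "nat \<Rightarrow> nat \<Rightarrow> real" and Y U beta b :: "nat \<Rightarrow> real"
    and c r s :: real
  assumes n: "1 \<le> n" and LK: "K \<le> L" and kend: "kend \<le> K"
    and model: "\<forall>i\<in>{1..n}. Y i = (\<Sum>k\<in>{1..K}. X k i * beta k) + U i"
    and exo: "\<forall>l\<in>{1..K - kend}. \<forall>i\<in>{1..n}. Z l i = X (kend + l) i"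
    and xpos: "\<forall>k\<in>{1..K}. 0 < xstar n X k"
    and zpos: "\<forall>l\<in>{1..L}. 0 < zstar n Z l"
    and c: "0 < c" "c < 1" and r: "0 < r" "r \<le> 1"
    and ev: "\<forall>l\<in>{1..L}. \<bar>(1 / real n) * (\<Sum>i\<in>{1..n}. Z l i / zstar n Z l * U i)\<bar>
               \<le> r * sqrt (Qhat n K X Y beta)"
    and sol: "stiv_solution n K L X Z Y r c b s"
  defines "\<sigma> \<equiv> sqrt (Qhat n K X Y beta)"
    and "\<Delta> \<equiv> (\<lambda>k. xstar n X k * (b k - beta k))"
    and "J \<equiv> supp K beta"
  shows "\<Delta> \<in> cone K c J"
    "supnorm {1..L} (Psi_app n K X Z \<Delta>) \<le> r * (s + \<sigma>)"
    "\<sigma> - s \<le> l1norm {1..kend} \<Delta> + r * l1norm {kend+1..K} \<Delta>"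
    "c * s \<le> c * \<sigma> + l1norm J \<Delta>"
    "0 < s" "0 \<le> \<sigma>"
proof -
  define G where "G bb = (\<lambda>l. (1 / real n) * (\<Sum>i\<in>{1..n}. Z l i / zstar n Z l *
         (Y i - (\<Sum>k\<in>{1..K}. X k i * bb k))))" for bb
  have npos: "real n > 0" using n by auto
  have xpos': "0 < xstar n X k" if "1 \<le> k" "k \<le> K" for k using xpos that by auto
  have feas: "stiv_feasible n K L X Z Y r b s" using sol by (simp add: stiv_solution_def)
  then have s0: "0 < s" and Gb: "supnorm {1..L} (G b) \<le> s * r" and Qb: "Qhat n K X Y b \<le> s\<^sup>2"
    by (auto simp: stiv_feasible_def G_def)
  show "0 < s" by (rule s0)
  have Qbeta: "Qhat n K X Y beta = (1 / real n) * (\<Sum>i\<in>{1..n}. (U i)\<^sup>2)"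
    unfolding Qhat_def using model by (auto intro!: sum.cong)
  have Q0: "0 \<le> Qhat n K X Y beta" unfolding Qbeta by (simp add: sum_nonneg)
  show s0': "0 \<le> \<sigma>" unfolding \<sigma>_def using Q0 by simp
  have sig2: "\<sigma>\<^sup>2 = (1 / real n) * (\<Sum>i\<in>{1..n}. (U i)\<^sup>2)" unfolding \<sigma>_def using Q0 Qbeta by simp
  have Gbeta_eq: "G beta l = (1 / real n) * (\<Sum>i\<in>{1..n}. Z l i / zstar n Z l * U i)" for l
    unfolding G_def using model by (auto intro!: sum.cong arg_cong[where f="\<lambda>x. _ * x"])
  have Gbeta_l: "\<bar>G beta l\<bar> \<le> r * \<sigma>" if "l \<in> {1..L}" for l
    using ev that unfolding Gbeta_eq \<sigma>_def by auto
  have Gbeta: "supnorm {1..L} (G beta) \<le> \<sigma> * r"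
    using Gbeta_l s0' r by (intro supnorm_le) (auto simp: mult.commute)
  have inner: "(\<Sum>k\<in>{1..K}. X k i * \<Delta> k / xstar n X k) =
      (Y i - (\<Sum>k\<in>{1..K}. X k i * beta k)) - (Y i - (\<Sum>k\<in>{1..K}. X k i * b k))" for i
  proof -
    have "(\<Sum>k\<in>{1..K}. X k i * \<Delta> k / xstar n X k) = (\<Sum>k\<in>{1..K}. X k i * b k - X k i * beta k)"
    proof (intro sum.cong refl)
      fix k assume "k \<in> {1..K}"
      then have "xstar n X k \<noteq> 0" using xpos by force
      then show "X k i * \<Delta> k / xstar n X k = X k i * b k - X k i * beta k"
        unfolding \<Delta>_def by (simp add: field_simps)
    qed
    then show ?thesis by (simp add: sum_subtractf)
  qed
  have Psi_eq: "Psi_app n K X Z \<Delta> l = G beta l - G b l" for l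
  proof -
    have "Psi_app n K X Z \<Delta> l = (1 / real n) * (\<Sum>i\<in>{1..n}. Z l i / zstar n Z l *
       ((Y i - (\<Sum>k\<in>{1..K}. X k i * beta k)) - (Y i - (\<Sum>k\<in>{1..K}. X k i * b k))))"
      unfolding Psi_app_def using inner by presburger
    also have "\<dots> = G beta l - G b l"
      unfolding G_def by (simp add: right_diff_distrib sum_subtractf)
    finally show ?thesis .
  qed
  show Pbound: "supnorm {1..L} (Psi_app n K X Z \<Delta>) \<le> r * (s + \<sigma>)"
  proof (rule supnorm_le)
    fix l assume l: "l \<in> {1..L}"
    have "\<bar>Psi_app n K X Z \<Delta> l\<bar> \<le> \<bar>G beta l\<bar> + \<bar>G b l\<bar>" unfolding Psi_eq by simp
    also have "\<dots> \<le> \<sigma> * r + s * r"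
      using supnorm_ge[of "{1..L}" l "G beta"] supnorm_ge[of "{1..L}" l "G b"] l Gbeta Gb by auto
    finally show "\<bar>Psi_app n K X Z \<Delta> l\<bar> \<le> r * (s + \<sigma>)" by (simp add: algebra_simps)
  qed (use r s0 s0' in auto)
  have obj: "stiv_obj n K X c b s \<le> stiv_obj n K X c beta \<sigma>"
  proof (rule field_le_epsilon)
    fix e :: real assume e: "0 < e"
    have "stiv_feasible n K L X Z Y r beta (\<sigma> + e / c)"
      unfolding stiv_feasible_def
    proof (intro conjI)
      show "0 < \<sigma> + e / c" using s0' e c by (metis add_nonneg_pos divide_pos_pos)
      have "supnorm {1..L} (G beta) \<le> (\<sigma> + e / c) * r"
        using Gbeta e c r by (smt (verit) divide_pos_pos mult_right_mono)
      then show "supnorm {1..L} (\<lambda>l. 1 / real n * (\<Sum>i = 1..n. Z l i / zstar n Z l * (Y i - (\<Sum>k = 1..K. X k i * beta k)))) \<le> (\<sigma> + e / c) * r"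
        unfolding G_def .
      have "Qhat n K X Y beta = \<sigma>\<^sup>2" unfolding \<sigma>_def using Q0 by simp
      also have "\<dots> \<le> (\<sigma> + e / c)\<^sup>2" using s0' e c by (intro power_mono) auto
      finally show "Qhat n K X Y beta \<le> (\<sigma> + e / c)\<^sup>2" .
    qed
    then have "stiv_obj n K X c b s \<le> stiv_obj n K X c beta (\<sigma> + e / c)"
      using sol by (auto simp: stiv_solution_def)
    then show "stiv_obj n K X c b s \<le> stiv_obj n K X c beta \<sigma> + e"
      using c by (simp add: stiv_obj_def algebra_simps)
  qed
  have Jsub: "J \<subseteq> {1..K}" unfolding J_def supp_def by auto
  have sumb: "(\<Sum>k\<in>{1..K}. xstar n X k * \<bar>b k\<bar>) =
      (\<Sum>k\<in>J. xstar n X k * \<bar>b k\<bar>) + l1norm ({1..K} - J) \<Delta>"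
  proof -
    have "(\<Sum>k\<in>{1..K}. xstar n X k * \<bar>b k\<bar>) =
      (\<Sum>k\<in>J. xstar n X k * \<bar>b k\<bar>) + (\<Sum>k\<in>{1..K} - J. xstar n X k * \<bar>b k\<bar>)"
      using Jsub by (metis (no_types, lifting) add.commute finite_atLeastAtMost sum.subset_diff)
    moreover have "(\<Sum>k\<in>{1..K} - J. xstar n X k * \<bar>b k\<bar>) = l1norm ({1..K} - J) \<Delta>"
      unfolding l1norm_def \<Delta>_def
      by (intro sum.cong) (auto simp: J_def supp_def abs_mult xpos' less_imp_le)
    ultimately show ?thesis by simp
  qed
  have sumbeta: "(\<Sum>k\<in>{1..K}. xstar n X k * \<bar>beta k\<bar>) = (\<Sum>k\<in>J. xstar n X k * \<bar>beta k\<bar>)"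
    using Jsub by (intro sum.mono_neutral_right) (auto simp: J_def supp_def)
  have sumJ: "(\<Sum>k\<in>J. xstar n X k * \<bar>beta k\<bar>) - l1norm J \<Delta> \<le> (\<Sum>k\<in>J. xstar n X k * \<bar>b k\<bar>)"
  proof -
    have "(\<Sum>k\<in>J. xstar n X k * \<bar>beta k\<bar> - \<bar>\<Delta> k\<bar>) \<le> (\<Sum>k\<in>J. xstar n X k * \<bar>b k\<bar>)"
    proof (rule sum_mono)
      fix k assume k: "k \<in> J"
      then have xp: "0 < xstar n X k" using xpos Jsub by auto
      have "xstar n X k * \<bar>beta k\<bar> \<le> xstar n X k * (\<bar>b k\<bar> + \<bar>b k - beta k\<bar>)"
        using xp by (intro mult_left_mono) auto
      then show "xstar n X k * \<bar>beta k\<bar> - \<bar>\<Delta> k\<bar> \<le> xstar n X k * \<bar>b k\<bar>"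
      proof -
        have "\<bar>\<Delta> k\<bar> = xstar n X k * \<bar>b k - beta k\<bar>" unfolding \<Delta>_def using xp by (simp add: abs_mult)
        then show ?thesis using \<open>xstar n X k * \<bar>beta k\<bar> \<le> xstar n X k * (\<bar>b k\<bar> + \<bar>b k - beta k\<bar>)\<close>
          by (simp add: distrib_left)
      qed
    qed
    then show ?thesis by (simp add: sum_subtractf l1norm_def)
  qed
  have F4: "l1norm ({1..K} - J) \<Delta> \<le> l1norm J \<Delta> + c * (\<sigma> - s)"
    using obj sumb sumbeta sumJ unfolding stiv_obj_def by (simp add: algebra_simps)
  show "c * s \<le> c * \<sigma> + l1norm J \<Delta>"
    using F4 l1norm_nonneg[of "{1..K} - J" \<Delta>] by (simp add: algebra_simps)
  define w where "w i = (\<Sum>k\<in>{1..K}. X k i * (b k - beta k))" for i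
  have Yb: "Y i - (\<Sum>k\<in>{1..K}. X k i * b k) = U i - w i" if "i \<in> {1..n}" for i
    using model that unfolding w_def by (simp add: sum_subtractf right_diff_distrib)
  have Qb': "Qhat n K X Y b = (1 / real n) * (\<Sum>i\<in>{1..n}. (U i - w i)\<^sup>2)"
    unfolding Qhat_def using Yb by (auto intro!: sum.cong arg_cong[where f="\<lambda>x. _ * x"])
  have sqQb: "sqrt (Qhat n K X Y b) \<le> s"
    using Qb s0 by (metis abs_of_pos real_sqrt_abs real_sqrt_le_mono)
  have CS1: "(1 / real n) * (\<Sum>i\<in>{1..n}. U i * (U i - w i)) \<le> \<sigma> * sqrt (Qhat n K X Y b)"
  proof -
    have "(\<Sum>i\<in>{1..n}. U i * (U i - w i)) \<le> sqrt (\<Sum>i\<in>{1..n}. (U i)\<^sup>2) * sqrt (\<Sum>i\<in>{1..n}. (U i - w i)\<^sup>2)"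
      by (rule cs_sum)
    then have "(1 / real n) * (\<Sum>i\<in>{1..n}. U i * (U i - w i)) \<le>
        (1 / real n) * (sqrt (\<Sum>i\<in>{1..n}. (U i)\<^sup>2) * sqrt (\<Sum>i\<in>{1..n}. (U i - w i)\<^sup>2))"
      using npos by (intro mult_left_mono) auto
    also have "\<dots> = sqrt ((1 / real n) * (\<Sum>i\<in>{1..n}. (U i)\<^sup>2)) * sqrt ((1 / real n) * (\<Sum>i\<in>{1..n}. (U i - w i)\<^sup>2))"
      using npos by (simp add: real_sqrt_mult real_sqrt_divide)
    finally show ?thesis unfolding \<sigma>_def Qbeta Qb' .
  qed
  have absU: "(1 / real n) * (\<Sum>i\<in>{1..n}. \<bar>U i\<bar>) \<le> \<sigma>"
  proof -
    have "(\<Sum>i\<in>{1..n}. \<bar>U i\<bar> * 1) \<le> sqrt (\<Sum>i\<in>{1..n}. \<bar>U i\<bar>\<^sup>2) * sqrt (\<Sum>i\<in>{1..n}. 1\<^sup>2)"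
      by (rule cs_sum)
    then have "(\<Sum>i\<in>{1..n}. \<bar>U i\<bar>) \<le> sqrt (\<Sum>i\<in>{1..n}. (U i)\<^sup>2) * sqrt (real n)" by simp
    then have "(1 / real n) * (\<Sum>i\<in>{1..n}. \<bar>U i\<bar>) \<le> (1 / real n) * (sqrt (\<Sum>i\<in>{1..n}. (U i)\<^sup>2) * sqrt (real n))"
      using npos by (intro mult_left_mono) auto
    also have "\<dots> = sqrt ((1 / real n) * (\<Sum>i\<in>{1..n}. (U i)\<^sup>2))"
      using npos by (simp add: real_sqrt_mult real_sqrt_divide field_simps)
    finally show ?thesis unfolding \<sigma>_def Qbeta .
  qed
  define coef where "coef k = (1 / real n) * (\<Sum>i\<in>{1..n}. U i * X k i / xstar n X k)" for k
  have Uw: "(1 / real n) * (\<Sum>i\<in>{1..n}. U i * w i) = (\<Sum>k\<in>{1..K}. \<Delta> k * coef k)"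
  proof -
    have "(\<Sum>i\<in>{1..n}. U i * w i) = (\<Sum>i\<in>{1..n}. \<Sum>k\<in>{1..K}. \<Delta> k * (U i * X k i / xstar n X k))"
      unfolding w_def \<Delta>_def using xpos
      by (auto simp: sum_distrib_left intro!: sum.cong)
    also have "\<dots> = (\<Sum>k\<in>{1..K}. \<Delta> k * (\<Sum>i\<in>{1..n}. U i * X k i / xstar n X k))"
      by (subst sum.swap) (simp add: sum_distrib_left)
    finally show ?thesis unfolding coef_def by (simp add: sum_distrib_left algebra_simps)
  qed
  have coef_end: "\<bar>coef k\<bar> \<le> \<sigma>" if "k \<in> {1..K}" for k
  proof -
    have xp: "0 < xstar n X k" using xpos that by auto
    have "\<bar>coef k\<bar> = (1 / real n) * \<bar>\<Sum>i\<in>{1..n}. U i * X k i / xstar n X k\<bar>"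
      unfolding coef_def by (simp add: abs_mult)
    also have "\<dots> \<le> (1 / real n) * (\<Sum>i\<in>{1..n}. \<bar>U i * X k i / xstar n X k\<bar>)"
      by (intro mult_left_mono sum_abs) auto
    also have "\<dots> \<le> (1 / real n) * (\<Sum>i\<in>{1..n}. \<bar>U i\<bar>)"
    proof (intro mult_left_mono sum_mono)
      fix i assume i: "i \<in> {1..n}"
      have "\<bar>X k i\<bar> \<le> xstar n X k" unfolding xstar_def using i by (intro Max_ge) auto
      then have "\<bar>X k i\<bar> / xstar n X k \<le> 1" using xp by simp
      then have "\<bar>U i\<bar> * (\<bar>X k i\<bar> / xstar n X k) \<le> \<bar>U i\<bar>" using mult_left_le[of "\<bar>X k i\<bar> / xstar n X k" "\<bar>U i\<bar>"] by simp
      then show "\<bar>U i * X k i / xstar n X k\<bar> \<le> \<bar>U i\<bar>" using xp by (simp add: abs_mult)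
    qed (use npos in auto)
    finally show ?thesis using absU by linarith
  qed
  have coef_exo: "\<bar>coef k\<bar> \<le> r * \<sigma>" if "k \<in> {kend+1..K}" for k
  proof -
    define l where "l = k - kend"
    have l: "l \<in> {1..K - kend}" "k = kend + l" using that unfolding l_def by auto
    then have lL: "l \<in> {1..L}" using LK by auto
    have XZ: "X k i = Z l i" if "i \<in> {1..n}" for i using exo l that by auto
    have "xstar n X k = zstar n Z l"
      unfolding xstar_def zstar_def using XZ by (intro arg_cong[where f=Max] image_cong) auto
    then have "coef k = G beta l"
      unfolding coef_def Gbeta_eq using XZ by (auto intro!: sum.cong arg_cong[where f="\<lambda>x. _ * x"])
    then show ?thesis using Gbeta_l[OF lL] by simp
  qed
  have split: "{1..K} = {1..kend} \<union> {kend+1..K}" using kend by auto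
  have "(\<Sum>k\<in>{1..K}. \<Delta> k * coef k) \<le> (\<Sum>k\<in>{1..K}. \<bar>\<Delta> k\<bar> * \<bar>coef k\<bar>)"
    by (rule sum_mono) (simp add: abs_mult[symmetric])
  also have "\<dots> = (\<Sum>k\<in>{1..kend}. \<bar>\<Delta> k\<bar> * \<bar>coef k\<bar>) + (\<Sum>k\<in>{kend+1..K}. \<bar>\<Delta> k\<bar> * \<bar>coef k\<bar>)"
    by (subst split, rule sum.union_disjoint) auto
  also have "\<dots> \<le> (\<Sum>k\<in>{1..kend}. \<bar>\<Delta> k\<bar> * \<sigma>) + (\<Sum>k\<in>{kend+1..K}. \<bar>\<Delta> k\<bar> * (r * \<sigma>))"
    using coef_end coef_exo kend by (intro add_mono sum_mono mult_left_mono) auto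
  also have "\<dots> = \<sigma> * (l1norm {1..kend} \<Delta> + r * l1norm {kend+1..K} \<Delta>)"
    by (simp add: l1norm_def sum_distrib_left sum_distrib_right algebra_simps)
  finally have Uwb: "(1 / real n) * (\<Sum>i\<in>{1..n}. U i * w i) \<le> \<sigma> * (l1norm {1..kend} \<Delta> + r * l1norm {kend+1..K} \<Delta>)"
    unfolding Uw .
  have "(1 / real n) * (\<Sum>i\<in>{1..n}. U i * (U i - w i)) = \<sigma>\<^sup>2 - (1 / real n) * (\<Sum>i\<in>{1..n}. U i * w i)"
    unfolding sig2 by (simp add: right_diff_distrib sum_subtractf power2_eq_square)
  then have key: "\<sigma>\<^sup>2 - \<sigma> * (l1norm {1..kend} \<Delta> + r * l1norm {kend+1..K} \<Delta>) \<le> \<sigma> * s"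
    using CS1 Uwb sqQb s0' mult_left_mono[OF sqQb s0'] by linarith
  show F5: "\<sigma> - s \<le> l1norm {1..kend} \<Delta> + r * l1norm {kend+1..K} \<Delta>"
  proof (cases "\<sigma> = 0")
    case True then show ?thesis using s0 r l1norm_nonneg[of "{1..kend}" \<Delta>] l1norm_nonneg[of "{kend+1..K}" \<Delta>]
      by (smt (verit) mult_nonneg_nonneg)
  next
    case False
    then have "\<sigma> > 0" using s0' by auto
    then show ?thesis using key by (simp add: power2_eq_square algebra_simps)
        (metis (no_types, opaque_lifting) mult_le_cancel_left_pos diff_le_eq add.commute distrib_left)
  qed
  have "l1norm {1..kend} \<Delta> + r * l1norm {kend+1..K} \<Delta> \<le> l1norm {1..kend} \<Delta> + l1norm {kend+1..K} \<Delta>"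
    using r l1norm_nonneg[of "{kend+1..K}" \<Delta>] by (simp add: mult_left_le_one_le)
  also have "\<dots> = l1norm {1..K} \<Delta>"
    unfolding l1norm_def by (subst split, rule sum.union_disjoint[symmetric]) auto
  also have "\<dots> = l1norm J \<Delta> + l1norm ({1..K} - J) \<Delta>"
    unfolding l1norm_def using Jsub by (metis finite_atLeastAtMost sum.subset_diff add.commute)
  finally have "\<sigma> - s \<le> l1norm J \<Delta> + l1norm ({1..K} - J) \<Delta>" using F5 by linarith
  then have "l1norm ({1..K} - J) \<Delta> \<le> l1norm J \<Delta> + c * (l1norm J \<Delta> + l1norm ({1..K} - J) \<Delta>)"
    using F4 c by (smt (verit) mult_left_mono)
  then have "(1 - c) * l1norm ({1..K} - J) \<Delta> \<le> (1 + c) * l1norm J \<Delta>" by (simp add: algebra_simps)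
  then show "\<Delta> \<in> cone K c J" unfolding cone_def using c by (simp add: field_simps)
qed


lemma det_final:
  fixes n K L kend :: nat and X Z :: "nat \<Rightarrow> nat \<Rightarrow> real" and Y U beta b :: "nat \<Rightarrow> real"
    and c r s :: real
  assumes n: "1 \<le> n" and LK: "K \<le> L" and kend: "kend \<le> K"
    and model: "\<forall>i\<in>{1..n}. Y i = (\<Sum>k\<in>{1..K}. X k i * beta k) + U i"
    and exo: "\<forall>l\<in>{1..K - kend}. \<forall>i\<in>{1..n}. Z l i = X (kend + l) i"
    and xpos: "\<forall>k\<in>{1..K}. 0 < xstar n X k"
    and zpos: "\<forall>l\<in>{1..L}. 0 < zstar n Z l"
    and c: "0 < c" "c < 1" and r: "0 < r" "r \<le> 1"
    and ev: "\<forall>l\<in>{1..L}. \<bar>(1 / real n) * (\<Sum>i\<in>{1..n}. Z l i / zstar n Z l * U i)\<bar>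
               \<le> r * sqrt (Qhat n K X Y beta)"
    and sol: "stiv_solution n K L X Z Y r c b s"
  shows "let J = supp K beta;
            Dn = 1 - ereal r / kappa_star n K L X Z c {1..kend} J
                   - ereal (r\<^sup>2) / kappa_star n K L X Z c {kend+1..K} J;
            kJJ = kappa_star n K L X Z c J J
        in (\<forall>p::ereal. 1 \<le> p \<longrightarrow>
              ereal (lpnorm K p (\<lambda>k. xstar n X k * (b k - beta k)))
                \<le> times_posinv (ereal (2 * s * r) / kappa_p n K L X Z c p J) Dn)
         \<and> (\<forall>k\<in>{1..K}. ereal \<bar>b k - beta k\<bar>
                \<le> times_posinv (ereal (2 * s * r) / (ereal (xstar n X k) * kappa_star n K L X Z c {k} J)) Dn)
         \<and> ereal s \<le> times_posinv
                (ereal (sqrt (Qhat n K X Y beta)) * (1 + ereal r / (ereal c * kJJ)))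
                (1 - ereal r / (ereal c * kJJ))"
proof -
  define \<sigma> where "\<sigma> = sqrt (Qhat n K X Y beta)"
  define \<Delta> where "\<Delta> = (\<lambda>k. xstar n X k * (b k - beta k))"
  define J where "J = supp K beta"
  define P where "P = supnorm {1..L} (Psi_app n K X Z \<Delta>)"
  note core = det_core[OF n LK kend model exo xpos zpos c r ev sol, folded \<sigma>_def \<Delta>_def J_def P_def]
  have cone: "\<Delta> \<in> cone K c J" and Pb: "P \<le> r * (s + \<sigma>)"
    and F5: "\<sigma> - s \<le> l1norm {1..kend} \<Delta> + r * l1norm {kend+1..K} \<Delta>"
    and F4: "c * s \<le> c * \<sigma> + l1norm J \<Delta>" and s0: "0 < s" and sg0: "0 \<le> \<sigma>"
    using core by auto
  define k1 where "k1 = kappa_star n K L X Z c {1..kend} J"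
  define k2 where "k2 = kappa_star n K L X Z c {kend+1..K} J"
  define Dn where "Dn = 1 - ereal r / k1 - ereal (r\<^sup>2) / k2"
  have r2: "0 < r\<^sup>2" using r by auto
  have main12: "(\<forall>p::ereal. 1 \<le> p \<longrightarrow>
              ereal (lpnorm K p \<Delta>) \<le> times_posinv (ereal (2 * s * r) / kappa_p n K L X Z c p J) Dn)
         \<and> (\<forall>k\<in>{1..K}. ereal \<bar>b k - beta k\<bar>
                \<le> times_posinv (ereal (2 * s * r) / (ereal (xstar n X k) * kappa_star n K L X Z c {k} J)) Dn)"
  proof (cases "Dn \<le> 0")
    case True then show ?thesis by (simp add: times_posinv_def)
  next
    case False
    have a10: "0 \<le> ereal r / k1" unfolding k1_def using r by (intro ereal_div_nonneg kappa_star_nonneg) auto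
    have a20: "0 \<le> ereal (r\<^sup>2) / k2" unfolding k2_def using r2 by (intro ereal_div_nonneg kappa_star_nonneg) auto
    note Dn = ereal_Dn[OF a10 a20 False[unfolded Dn_def]]
    define A1 where "A1 = real_of_ereal (ereal r / k1)"
    define A2 where "A2 = real_of_ereal (ereal (r\<^sup>2) / k2)"
    have Dn_eq: "Dn = ereal (1 - (A1 + A2))" using Dn(3) unfolding Dn_def A1_def A2_def by simp
    have A1: "1 - (A1 + A2) > 0" using Dn(4) unfolding A1_def A2_def by simp
    have fin1: "ereal r / k1 \<noteq> \<infinity>" by (subst Dn(1)) simp
    have fin2: "ereal (r\<^sup>2) / k2 \<noteq> \<infinity>" by (subst Dn(2)) simp
    have b1: "k1 * ereal (l1norm {1..kend} \<Delta>) \<le> ereal P"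
      unfolding k1_def P_def by (rule kappa_star_bound[OF cone])
    have b2: "k2 * ereal (l1norm {kend+1..K} \<Delta>) \<le> ereal P"
      unfolding k2_def P_def by (rule kappa_star_bound[OF cone])
    note e1 = ereal_E1[OF r(1) _ b1 l1norm_nonneg fin1, folded A1_def]
    note e2 = ereal_E1[OF r2 _ b2 l1norm_nonneg fin2, folded A2_def]
    have k1n: "0 \<le> k1" "0 \<le> k2" unfolding k1_def k2_def by (auto intro: kappa_star_nonneg)
    have v1: "r * l1norm {1..kend} \<Delta> \<le> A1 * (r * (s + \<sigma>))"
      using e1(1)[OF k1n(1)] e1(2)[OF k1n(1)] Pb by (smt (verit) mult_left_mono)
    have v2: "r\<^sup>2 * l1norm {kend+1..K} \<Delta> \<le> A2 * (r * (s + \<sigma>))"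
      using e2(1)[OF k1n(2)] e2(2)[OF k1n(2)] Pb by (smt (verit) mult_left_mono)
    have v1': "l1norm {1..kend} \<Delta> \<le> A1 * (s + \<sigma>)"
      using v1 r by (simp add: mult.left_commute)
    have v2': "r * l1norm {kend+1..K} \<Delta> \<le> A2 * (s + \<sigma>)"
      using v2 r by (simp add: power2_eq_square mult.assoc mult.left_commute)
    have "\<sigma> - s \<le> (A1 + A2) * (s + \<sigma>)" using F5 v1' v2' by (simp add: algebra_simps)
    then have "\<sigma> * (1 - (A1 + A2)) \<le> s * (1 + (A1 + A2))" by (simp add: algebra_simps)
    then have "(s + \<sigma>) * (1 - (A1 + A2)) \<le> 2 * s" by (simp add: algebra_simps)
    then have ss: "s + \<sigma> \<le> 2 * s / (1 - (A1 + A2))" using A1 by (simp add: field_simps)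
    have PN: "P \<le> (2 * s * r) / (1 - (A1 + A2))"
    proof -
      have "P \<le> r * (s + \<sigma>)" by (rule Pb)
      also have "\<dots> \<le> r * (2 * s / (1 - (A1 + A2)))" using ss r by (intro mult_left_mono) auto
      finally show ?thesis by (simp add: mult_ac)
    qed
    have N0: "0 < 2 * s * r" using s0 r by auto
    show ?thesis
    proof (intro conjI allI impI ballI)
      fix p :: ereal assume p: "1 \<le> p"
      have "ereal (lpnorm K p \<Delta>) \<le> (ereal (2 * s * r) / kappa_p n K L X Z c p J) / ereal (1 - (A1 + A2))"
        by (rule ereal_E2[OF kappa_p_nonneg kappa_p_bound[OF cone p, where n=n and L=L and X=X and Z=Z, folded P_def] lpnorm_nonneg PN A1 N0])
      then show "ereal (lpnorm K p \<Delta>) \<le> times_posinv (ereal (2 * s * r) / kappa_p n K L X Z c p J) Dn"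
        using False Dn_eq by (simp add: times_posinv_def)
    next
      fix k assume k: "k \<in> {1..K}"
      have xp: "0 < xstar n X k" using xpos k by auto
      have "kappa_star n K L X Z c {k} J * ereal (l1norm {k} \<Delta>) \<le> ereal P"
        unfolding P_def by (rule kappa_star_bound[OF cone])
      moreover have "l1norm {k} \<Delta> = xstar n X k * \<bar>b k - beta k\<bar>"
        unfolding l1norm_def \<Delta>_def using xp by (simp add: abs_mult)
      ultimately have bk0: "kappa_star n K L X Z c {k} J * (ereal (xstar n X k) * ereal \<bar>b k - beta k\<bar>) \<le> ereal P"
        by simp
      have "(ereal (xstar n X k) * kappa_star n K L X Z c {k} J) * ereal \<bar>b k - beta k\<bar>
          = kappa_star n K L X Z c {k} J * (ereal (xstar n X k) * ereal \<bar>b k - beta k\<bar>)"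
        by (simp only: mult_ac)
      with bk0 have bk: "(ereal (xstar n X k) * kappa_star n K L X Z c {k} J) * ereal \<bar>b k - beta k\<bar> \<le> ereal P"
        by simp
      have kn: "0 \<le> ereal (xstar n X k) * kappa_star n K L X Z c {k} J"
        using xp kappa_star_nonneg by simp
      have "ereal \<bar>b k - beta k\<bar> \<le> (ereal (2 * s * r) / (ereal (xstar n X k) * kappa_star n K L X Z c {k} J)) / ereal (1 - (A1 + A2))"
        by (rule ereal_E2[OF kn bk _ PN A1 N0]) simp
      then show "ereal \<bar>b k - beta k\<bar> \<le> times_posinv (ereal (2 * s * r) / (ereal (xstar n X k) * kappa_star n K L X Z c {k} J)) Dn"
        using False Dn_eq by (simp add: times_posinv_def)
    qed
  qed
  define kJJ where "kJJ = kappa_star n K L X Z c J J"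
  have main3: "ereal s \<le> times_posinv (ereal \<sigma> * (1 + ereal r / (ereal c * kJJ))) (1 - ereal r / (ereal c * kJJ))"
  proof (cases "1 - ereal r / (ereal c * kJJ) \<le> 0")
    case True then show ?thesis by (simp add: times_posinv_def)
  next
    case False
    have kn: "0 \<le> kJJ" unfolding kJJ_def by (rule kappa_star_nonneg)
    have rc: "0 < r / c" using r c by auto
    have eq: "ereal r / (ereal c * kJJ) = ereal (r / c) / kJJ" using c(1) r(1) by (rule ereal_div_c)
    have a0: "0 \<le> ereal (r / c) / kJJ" using rc kn by (rule ereal_div_nonneg)
    have F': "\<not> 1 - ereal (r / c) / kJJ - 0 \<le> 0" using False eq by simp
    note Dn = ereal_Dn[OF a0 order.refl F']
    define B where "B = real_of_ereal (ereal (r / c) / kJJ)"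
    have Beq: "ereal (r / c) / kJJ = ereal B" using Dn(1) unfolding B_def .
    have B1: "B < 1" using Dn(4) unfolding B_def by simp
    have B0: "0 \<le> B" using a0 Beq by simp
    have fin: "ereal (r / c) / kJJ \<noteq> \<infinity>" using Beq by simp
    have bJ: "kJJ * ereal (l1norm J \<Delta>) \<le> ereal P"
      unfolding kJJ_def P_def by (rule kappa_star_bound[OF cone])
    note e = ereal_E1[OF rc kn bJ l1norm_nonneg fin, folded B_def]
    have "r / c * l1norm J \<Delta> \<le> B * (r * (s + \<sigma>))"
      using e Pb by (smt (verit) mult_left_mono)
    then have "r * l1norm J \<Delta> \<le> r * (c * B * (s + \<sigma>))" using r c by (simp add: field_simps)
    then have "l1norm J \<Delta> \<le> c * B * (s + \<sigma>)" using r by simp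
    then have "c * s \<le> c * (\<sigma> + B * (s + \<sigma>))" using F4 by (simp add: algebra_simps)
    then have "s \<le> \<sigma> + B * (s + \<sigma>)" using c by simp
    then have "s * (1 - B) \<le> \<sigma> * (1 + B)" by (simp add: algebra_simps)
    then have "s \<le> \<sigma> * (1 + B) / (1 - B)" using B1 by (simp add: field_simps)
    then show ?thesis using False B1 by (simp add: times_posinv_def eq Beq one_ereal_def)
  qed
  show ?thesis unfolding Let_def using main12 main3
    by (simp add: \<sigma>_def \<Delta>_def J_def k1_def k2_def Dn_def kJJ_def)
qed


lemma jsw_apply:
  fixes M :: "'a measure" and W :: "nat \<Rightarrow> 'a \<Rightarrow> real"
  assumes jsw: "jsw_constant M A0" and d: "0 < \<delta>" "\<delta> \<le> 1" and n: "1 \<le> n"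
    and ind: "prob_space.indep_vars M (\<lambda>_. borel) W {1..n}"
    and int: "\<forall>i\<in>{1..n}. integrable M (\<lambda>\<omega>. \<bar>W i \<omega>\<bar> powr (2 + \<delta>))"
    and pos: "\<forall>i\<in>{1..n}. 0 < integral\<^sup>L M (\<lambda>\<omega>. \<bar>W i \<omega>\<bar> powr (2 + \<delta>))"
    and mean: "\<forall>i\<in>{1..n}. integral\<^sup>L M (W i) = 0"
    and x: "0 \<le> x" "x \<le> sqrt (\<Sum>i\<in>{1..n}. integral\<^sup>L M (\<lambda>\<omega>. (W i \<omega>)\<^sup>2)) /
          (\<Sum>i\<in>{1..n}. integral\<^sup>L M (\<lambda>\<omega>. \<bar>W i \<omega>\<bar> powr (2 + \<delta>))) powr (1 / (2 + \<delta>))"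
  shows "measure M {\<omega> \<in> space M. (\<Sum>i\<in>{1..n}. W i \<omega>) / sqrt (\<Sum>i\<in>{1..n}. (W i \<omega>)\<^sup>2) \<ge> x}
      \<le> (1 - Phi x) + A0 * (1 + x) powr (1 + \<delta>) * exp (- x\<^sup>2 / 2) /
          (sqrt (\<Sum>i\<in>{1..n}. integral\<^sup>L M (\<lambda>\<omega>. (W i \<omega>)\<^sup>2)) /
          (\<Sum>i\<in>{1..n}. integral\<^sup>L M (\<lambda>\<omega>. \<bar>W i \<omega>\<bar> powr (2 + \<delta>))) powr (1 / (2 + \<delta>))) powr (2 + \<delta>)"
proof -
  have "\<bar>measure M {\<omega> \<in> space M. (\<Sum>i\<in>{1..n}. W i \<omega>) / sqrt (\<Sum>i\<in>{1..n}. (W i \<omega>)\<^sup>2) \<ge> x} - (1 - Phi x)\<bar>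
      \<le> A0 * (1 + x) powr (1 + \<delta>) * exp (- x\<^sup>2 / 2) /
          (sqrt (\<Sum>i\<in>{1..n}. integral\<^sup>L M (\<lambda>\<omega>. (W i \<omega>)\<^sup>2)) /
          (\<Sum>i\<in>{1..n}. integral\<^sup>L M (\<lambda>\<omega>. \<bar>W i \<omega>\<bar> powr (2 + \<delta>))) powr (1 / (2 + \<delta>))) powr (2 + \<delta>)"
    using jsw d n ind int pos mean x unfolding jsw_constant_def Let_def
    by (elim allE[where x=n] allE[where x=W] allE[where x=\<delta>]) auto
  then show ?thesis by linarith
qed


lemma lyap:
  fixes W :: "'a \<Rightarrow> real" and M :: "'a measure"
  assumes P: "prob_space M" and meas: "W \<in> borel_measurable M" and d: "0 < \<delta>"
    and int: "integrable M (\<lambda>\<omega>. \<bar>W \<omega>\<bar> powr (2 + \<delta>))"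
    and m: "0 < integral\<^sup>L M (\<lambda>\<omega>. \<bar>W \<omega>\<bar> powr (2 + \<delta>))"
  shows "integrable M (\<lambda>\<omega>. (W \<omega>)\<^sup>2)"
    "integral\<^sup>L M (\<lambda>\<omega>. (W \<omega>)\<^sup>2) \<le> (integral\<^sup>L M (\<lambda>\<omega>. \<bar>W \<omega>\<bar> powr (2 + \<delta>))) powr (2 / (2 + \<delta>))"
proof -
  interpret prob_space M by (rule P)
  define mm where "mm = integral\<^sup>L M (\<lambda>\<omega>. \<bar>W \<omega>\<bar> powr (2 + \<delta>))"
  define q where "q = 2 / (2 + \<delta>)"
  have q: "0 \<le> q" "q \<le> 1" using d unfolding q_def by auto
  have mp: "0 < mm" using m unfolding mm_def .
  define g where "g \<omega> = (q * \<bar>W \<omega>\<bar> powr (2 + \<delta>) + (1 - q) * mm) / mm powr (1 - q)" for \<omega>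
  have pt: "(W \<omega>)\<^sup>2 \<le> g \<omega>" for \<omega>
  proof (cases "W \<omega> = 0")
    case True
    then show ?thesis unfolding g_def using q mp by (auto intro!: divide_nonneg_pos)
  next
    case False
    have "(\<bar>W \<omega>\<bar> powr (2 + \<delta>)) powr q * mm powr (1 - q) \<le> q * \<bar>W \<omega>\<bar> powr (2 + \<delta>) + (1 - q) * mm"
      using q mp False by (intro Youngs_inequality_0) auto
    moreover have "(\<bar>W \<omega>\<bar> powr (2 + \<delta>)) powr q = (W \<omega>)\<^sup>2"
    proof -
      have e: "(2 + \<delta>) * (2 / (2 + \<delta>)) = 2" using d by (simp add: field_simps)
      have "(\<bar>W \<omega>\<bar> powr (2 + \<delta>)) powr q = \<bar>W \<omega>\<bar> powr 2"
        unfolding q_def powr_powr e ..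
      also have "\<dots> = (W \<omega>)\<^sup>2" using False by (simp add: powr_numeral)
      finally show ?thesis .
    qed
    ultimately show ?thesis unfolding g_def using mp by (simp add: field_simps)
  qed
  have gi: "integrable M g" unfolding g_def using int by (intro integrable_divide integrable_add integrable_mult_right) auto
  show wi: "integrable M (\<lambda>\<omega>. (W \<omega>)\<^sup>2)"
    using gi meas pt by (intro Bochner_Integration.integrable_bound[OF gi]) (auto intro!: AE_I2 order.trans[OF pt[of _]] abs_ge_self)
  have "integral\<^sup>L M (\<lambda>\<omega>. (W \<omega>)\<^sup>2) \<le> integral\<^sup>L M g"
    using wi gi pt by (intro integral_mono) auto
  also have "integral\<^sup>L M g = (q * mm + (1 - q) * mm) / mm powr (1 - q)"
    unfolding g_def using int by (simp add: mm_def prob_space)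
  also have "\<dots> = mm powr q" using mp by (simp add: algebra_simps powr_diff)
  finally show "integral\<^sup>L M (\<lambda>\<omega>. (W \<omega>)\<^sup>2) \<le> (integral\<^sup>L M (\<lambda>\<omega>. \<bar>W \<omega>\<bar> powr (2 + \<delta>))) powr (2 / (2 + \<delta>))"
    unfolding mm_def q_def .
qed


locale stiv_setting =
  fixes M :: "'a measure" and n K L :: nat and y u :: "nat \<Rightarrow> 'a \<Rightarrow> real"
    and x z :: "nat \<Rightarrow> nat \<Rightarrow> 'a \<Rightarrow> real" and \<delta> :: real
  assumes P: "prob_space M" and n_pos: "1 \<le> n" and L_pos: "1 \<le> L"
    and indep: "prob_space.indep_vars M
        (\<lambda>i. borel \<Otimes>\<^sub>M (\<Pi>\<^sub>M k\<in>{1..K}. borel) \<Otimes>\<^sub>M (\<Pi>\<^sub>M l\<in>{1..L}. borel) \<Otimes>\<^sub>M borel)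
        (\<lambda>i \<omega>. (y i \<omega>, restrict (\<lambda>k. x k i \<omega>) {1..K}, restrict (\<lambda>l. z l i \<omega>) {1..L}, u i \<omega>))
        {1..n}"
    and delta: "0 < \<delta>" "\<delta> \<le> 1"
    and A1_int: "\<forall>l\<in>{1..L}. \<forall>i\<in>{1..n}. integrable M (\<lambda>\<omega>. \<bar>z l i \<omega> * u i \<omega>\<bar> powr (2 + \<delta>))"
    and A1_mean: "\<forall>l\<in>{1..L}. \<forall>i\<in>{1..n}. integral\<^sup>L M (\<lambda>\<omega>. z l i \<omega> * u i \<omega>) = 0"
    and A1_nz: "\<forall>l\<in>{1..L}. \<forall>i\<in>{1..n}. \<not> (AE \<omega> in M. z l i \<omega> * u i \<omega> = 0)"
begin

interpretation prob_space M by (rule P)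

definition dl :: "nat \<Rightarrow> real" where
  "dl l = sqrt (\<Sum>i\<in>{1..n}. integral\<^sup>L M (\<lambda>\<omega>. (z l i \<omega> * u i \<omega>)\<^sup>2)) /
      (\<Sum>i\<in>{1..n}. integral\<^sup>L M (\<lambda>\<omega>. \<bar>z l i \<omega> * u i \<omega>\<bar> powr (2 + \<delta>))) powr (1 / (2 + \<delta>))"

lemma rv: "i \<in> {1..n} \<Longrightarrow> (\<lambda>\<omega>. (y i \<omega>, restrict (\<lambda>k. x k i \<omega>) {1..K}, restrict (\<lambda>l. z l i \<omega>) {1..L}, u i \<omega>))
   \<in> measurable M (borel \<Otimes>\<^sub>M (\<Pi>\<^sub>M k\<in>{1..K}. borel) \<Otimes>\<^sub>M (\<Pi>\<^sub>M l\<in>{1..L}. borel) \<Otimes>\<^sub>M borel)"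
  using indep unfolding indep_vars_def by auto

lemma fmeas: "l \<in> {1..L} \<Longrightarrow> (\<lambda>v::real \<times> (nat \<Rightarrow> real) \<times> (nat \<Rightarrow> real) \<times> real. fst (snd (snd v)) l * snd (snd (snd v)))
   \<in> borel_measurable (borel \<Otimes>\<^sub>M (\<Pi>\<^sub>M k\<in>{1..K}. borel) \<Otimes>\<^sub>M (\<Pi>\<^sub>M l\<in>{1..L}. borel) \<Otimes>\<^sub>M borel)"
  by measurable

lemma measW: "l \<in> {1..L} \<Longrightarrow> i \<in> {1..n} \<Longrightarrow> (\<lambda>\<omega>. z l i \<omega> * u i \<omega>) \<in> borel_measurable M"
  using measurable_comp[OF rv fmeas] by (simp add: comp_def)

lemma indW: "l \<in> {1..L} \<Longrightarrow> indep_vars (\<lambda>_. borel) (\<lambda>i \<omega>. z l i \<omega> * u i \<omega>) {1..n}"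
  using indep_vars_compose2[OF indep, of "\<lambda>_ v. fst (snd (snd v)) l * snd (snd (snd v))" "\<lambda>_. borel"] fmeas
  by simp

lemma indW': "l \<in> {1..L} \<Longrightarrow> indep_vars (\<lambda>_. borel) (\<lambda>i \<omega>. - (z l i \<omega> * u i \<omega>)) {1..n}"
  using indep_vars_compose2[OF indW, of l "\<lambda>_ v. - v" "\<lambda>_. borel"] by simp

lemma posm: "l \<in> {1..L} \<Longrightarrow> i \<in> {1..n} \<Longrightarrow> 0 < integral\<^sup>L M (\<lambda>\<omega>. \<bar>z l i \<omega> * u i \<omega>\<bar> powr (2 + \<delta>))"
proof -
  assume l: "l \<in> {1..L}" and i: "i \<in> {1..n}"
  have int: "integrable M (\<lambda>\<omega>. \<bar>z l i \<omega> * u i \<omega>\<bar> powr (2 + \<delta>))" using A1_int l i by auto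
  have ge: "0 \<le> integral\<^sup>L M (\<lambda>\<omega>. \<bar>z l i \<omega> * u i \<omega>\<bar> powr (2 + \<delta>))" by (simp add: integral_nonneg_AE)
  show ?thesis
  proof (rule ccontr)
    assume "\<not> ?thesis"
    then have "integral\<^sup>L M (\<lambda>\<omega>. \<bar>z l i \<omega> * u i \<omega>\<bar> powr (2 + \<delta>)) = 0" using ge by auto
    then have "AE \<omega> in M. \<bar>z l i \<omega> * u i \<omega>\<bar> powr (2 + \<delta>) = 0"
      using integral_nonneg_eq_0_iff_AE[OF int] by auto
    then have "AE \<omega> in M. z l i \<omega> * u i \<omega> = 0" by (auto elim!: AE_mp)
    then show False using A1_nz l i by auto
  qed
qed

lemma lyapW: "l \<in> {1..L} \<Longrightarrow> i \<in> {1..n} \<Longrightarrow>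
   integrable M (\<lambda>\<omega>. (z l i \<omega> * u i \<omega>)\<^sup>2) \<and>
   integral\<^sup>L M (\<lambda>\<omega>. (z l i \<omega> * u i \<omega>)\<^sup>2) \<le> (integral\<^sup>L M (\<lambda>\<omega>. \<bar>z l i \<omega> * u i \<omega>\<bar> powr (2 + \<delta>))) powr (2 / (2 + \<delta>))"
  using lyap[OF P measW _ _ posm, of l i] A1_int delta by auto

lemma pos2: "l \<in> {1..L} \<Longrightarrow> i \<in> {1..n} \<Longrightarrow> 0 < integral\<^sup>L M (\<lambda>\<omega>. (z l i \<omega> * u i \<omega>)\<^sup>2)"
proof -
  assume l: "l \<in> {1..L}" and i: "i \<in> {1..n}"
  have int: "integrable M (\<lambda>\<omega>. (z l i \<omega> * u i \<omega>)\<^sup>2)" using lyapW[OF l i] by auto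
  have ge: "0 \<le> integral\<^sup>L M (\<lambda>\<omega>. (z l i \<omega> * u i \<omega>)\<^sup>2)" by (simp add: integral_nonneg_AE)
  show ?thesis
  proof (rule ccontr)
    assume "\<not> ?thesis"
    then have "integral\<^sup>L M (\<lambda>\<omega>. (z l i \<omega> * u i \<omega>)\<^sup>2) = 0" using ge by auto
    then have "AE \<omega> in M. (z l i \<omega> * u i \<omega>)\<^sup>2 = 0"
      using integral_nonneg_eq_0_iff_AE[OF int] by auto
    then have "AE \<omega> in M. z l i \<omega> * u i \<omega> = 0" by (auto elim!: AE_mp)
    then show False using A1_nz l i by auto
  qed
qed

lemma dl_pos: "l \<in> {1..L} \<Longrightarrow> 0 < dl l"
proof -
  assume l: "l \<in> {1..L}"
  have "0 < (\<Sum>i\<in>{1..n}. integral\<^sup>L M (\<lambda>\<omega>. (z l i \<omega> * u i \<omega>)\<^sup>2))"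
    using pos2[OF l] n_pos by (intro sum_pos) auto
  moreover have "0 < (\<Sum>i\<in>{1..n}. integral\<^sup>L M (\<lambda>\<omega>. \<bar>z l i \<omega> * u i \<omega>\<bar> powr (2 + \<delta>)))"
    using posm[OF l] n_pos by (intro sum_pos) auto
  ultimately show ?thesis unfolding dl_def by simp
qed

lemma dl_sq: "l \<in> {1..L} \<Longrightarrow> (dl l)\<^sup>2 \<le> real n"
proof -
  assume l: "l \<in> {1..L}"
  define S2 where "S2 = (\<Sum>i\<in>{1..n}. integral\<^sup>L M (\<lambda>\<omega>. (z l i \<omega> * u i \<omega>)\<^sup>2))"
  define Sm where "Sm = (\<Sum>i\<in>{1..n}. integral\<^sup>L M (\<lambda>\<omega>. \<bar>z l i \<omega> * u i \<omega>\<bar> powr (2 + \<delta>)))"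
  have S20: "0 \<le> S2" unfolding S2_def by (intro sum_nonneg integral_nonneg_AE) auto
  have Smp: "0 < Sm" unfolding Sm_def using posm[OF l] n_pos by (intro sum_pos) auto
  have "S2 \<le> (\<Sum>i\<in>{1..n}. Sm powr (2 / (2 + \<delta>)))"
    unfolding S2_def
  proof (rule sum_mono)
    fix i assume i: "i \<in> {1..n}"
    have "integral\<^sup>L M (\<lambda>\<omega>. (z l i \<omega> * u i \<omega>)\<^sup>2) \<le> (integral\<^sup>L M (\<lambda>\<omega>. \<bar>z l i \<omega> * u i \<omega>\<bar> powr (2 + \<delta>))) powr (2 / (2 + \<delta>))"
      using lyapW[OF l i] by auto
    also have "\<dots> \<le> Sm powr (2 / (2 + \<delta>))"
    proof (rule powr_mono2)
      show "0 \<le> 2 / (2 + \<delta>)" using delta by auto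
      show "0 \<le> integral\<^sup>L M (\<lambda>\<omega>. \<bar>z l i \<omega> * u i \<omega>\<bar> powr (2 + \<delta>))"
        using posm[OF l i] by simp
      show "integral\<^sup>L M (\<lambda>\<omega>. \<bar>z l i \<omega> * u i \<omega>\<bar> powr (2 + \<delta>)) \<le> Sm"
        unfolding Sm_def using i by (intro member_le_sum) (auto intro: integral_nonneg_AE)
    qed
    finally show "integral\<^sup>L M (\<lambda>\<omega>. (z l i \<omega> * u i \<omega>)\<^sup>2) \<le> Sm powr (2 / (2 + \<delta>))" .
  qed
  then have S2le: "S2 \<le> real n * Sm powr (2 / (2 + \<delta>))" by simp
  have "(dl l)\<^sup>2 = S2 / (Sm powr (1 / (2 + \<delta>)))\<^sup>2"
    unfolding dl_def S2_def[symmetric] Sm_def[symmetric] using S20 by (simp add: power_divide)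
  also have "(Sm powr (1 / (2 + \<delta>)))\<^sup>2 = Sm powr (2 / (2 + \<delta>))"
    using Smp by (simp add: powr_powr[symmetric] powr_numeral[symmetric] powr_powr)
  finally show ?thesis using S2le Smp by (simp add: divide_le_eq mult.commute)
qed

lemma d_le: "l \<in> {1..L} \<Longrightarrow> d_ndelta M n L \<delta> z u \<le> dl l"
  unfolding d_ndelta_def dl_def by (intro Min_le) auto

lemma d_pos: "0 < d_ndelta M n L \<delta> z u"
proof -
  have "d_ndelta M n L \<delta> z u \<in> dl ` {1..L}"
    unfolding d_ndelta_def dl_def[abs_def] using L_pos by (intro Min_in) auto
  then show ?thesis using dl_pos by auto
qed

lemma bound1: assumes jsw: "jsw_constant M A0" and l: "l \<in> {1..L}" and xx: "0 \<le> t" "t \<le> dl l"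
  shows "measure M {\<omega> \<in> space M. (\<Sum>i\<in>{1..n}. z l i \<omega> * u i \<omega>) / sqrt (\<Sum>i\<in>{1..n}. (z l i \<omega> * u i \<omega>)\<^sup>2) \<ge> t}
      \<le> (1 - Phi t) + A0 * (1 + t) powr (1 + \<delta>) * exp (- t\<^sup>2 / 2) / (dl l) powr (2 + \<delta>)"
  using jsw_apply[OF jsw delta n_pos indW[OF l], of t] A1_int A1_mean posm[OF l] l xx
  unfolding dl_def by auto

lemma bound2: assumes jsw: "jsw_constant M A0" and l: "l \<in> {1..L}" and xx: "0 \<le> t" "t \<le> dl l"
  shows "measure M {\<omega> \<in> space M. (\<Sum>i\<in>{1..n}. - (z l i \<omega> * u i \<omega>)) / sqrt (\<Sum>i\<in>{1..n}. (- (z l i \<omega> * u i \<omega>))\<^sup>2) \<ge> t}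
      \<le> (1 - Phi t) + A0 * (1 + t) powr (1 + \<delta>) * exp (- t\<^sup>2 / 2) / (dl l) powr (2 + \<delta>)"
  using jsw_apply[OF jsw delta n_pos indW'[OF l], of t] A1_int A1_mean posm[OF l] l xx
  unfolding dl_def by auto

end


context stiv_setting begin

interpretation prob_space M by (rule P)

definition BB :: "real \<Rightarrow> nat \<Rightarrow> 'a set" where
  "BB t l = {\<omega> \<in> space M. (\<Sum>i\<in>{1..n}. z l i \<omega> * u i \<omega>) / sqrt (\<Sum>i\<in>{1..n}. (z l i \<omega> * u i \<omega>)\<^sup>2) \<ge> t}"
definition BB' :: "real \<Rightarrow> nat \<Rightarrow> 'a set" where
  "BB' t l = {\<omega> \<in> space M. (\<Sum>i\<in>{1..n}. - (z l i \<omega> * u i \<omega>)) / sqrt (\<Sum>i\<in>{1..n}. (- (z l i \<omega> * u i \<omega>))\<^sup>2) \<ge> t}"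

lemma measS: "l \<in> {1..L} \<Longrightarrow> (\<lambda>\<omega>. \<Sum>i\<in>{1..n}. z l i \<omega> * u i \<omega>) \<in> borel_measurable M"
  using measW by (intro borel_measurable_sum) auto

lemma measV: "l \<in> {1..L} \<Longrightarrow> (\<lambda>\<omega>. sqrt (\<Sum>i\<in>{1..n}. (z l i \<omega> * u i \<omega>)\<^sup>2)) \<in> borel_measurable M"
proof -
  assume l: "l \<in> {1..L}"
  have "(\<lambda>\<omega>. \<Sum>i\<in>{1..n}. (z l i \<omega> * u i \<omega>)\<^sup>2) \<in> borel_measurable M"
    using measW[OF l] by (intro borel_measurable_sum borel_measurable_power) auto
  then show ?thesis by measurable
qed

lemma BB_sets: "l \<in> {1..L} \<Longrightarrow> BB t l \<in> sets M" "l \<in> {1..L} \<Longrightarrow> BB' t l \<in> sets M"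
proof -
  assume l: "l \<in> {1..L}"
  note m1 = measS[OF l] and m2 = measV[OF l]
  have e: "BB' t l = {\<omega> \<in> space M. t \<le> - ((\<Sum>i\<in>{1..n}. z l i \<omega> * u i \<omega>) / sqrt (\<Sum>i\<in>{1..n}. (z l i \<omega> * u i \<omega>)\<^sup>2))}"
    unfolding BB'_def by (simp add: sum_negf)
  show "BB t l \<in> sets M" unfolding BB_def using m1 m2 by measurable
  show "BB' t l \<in> sets M" unfolding e using m1 m2 by measurable
qed

lemma union_bound:
  assumes jsw: "jsw_constant M A0" and A0: "0 \<le> A0" and t: "0 \<le> t" "t \<le> d_ndelta M n L \<delta> z u"
  shows "measure M (\<Union>l\<in>{1..L}. BB t l \<union> BB' t l) \<le>
     2 * real L * (1 - Phi t + A0 * (1 + t) powr (1 + \<delta>) * exp (- t\<^sup>2 / 2) / (d_ndelta M n L \<delta> z u) powr (2 + \<delta>))"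
proof -
  define d where "d = d_ndelta M n L \<delta> z u"
  define bd where "bd = 1 - Phi t + A0 * (1 + t) powr (1 + \<delta>) * exp (- t\<^sup>2 / 2) / d powr (2 + \<delta>)"
  have dp: "0 < d" unfolding d_def by (rule d_pos)
  have per: "measure M (BB t l \<union> BB' t l) \<le> 2 * bd" if l: "l \<in> {1..L}" for l
  proof -
    have tl: "t \<le> dl l" using t d_le[OF l] by auto
    have mono: "A0 * (1 + t) powr (1 + \<delta>) * exp (- t\<^sup>2 / 2) / (dl l) powr (2 + \<delta>)
        \<le> A0 * (1 + t) powr (1 + \<delta>) * exp (- t\<^sup>2 / 2) / d powr (2 + \<delta>)"
    proof (rule divide_left_mono)
      show "d powr (2 + \<delta>) \<le> dl l powr (2 + \<delta>)"
        using d_le[OF l] dp delta by (intro powr_mono2) (auto simp: d_def)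
      show "0 \<le> A0 * (1 + t) powr (1 + \<delta>) * exp (- t\<^sup>2 / 2)" using A0 by simp
      show "0 < dl l powr (2 + \<delta>) * d powr (2 + \<delta>)" using dl_pos[OF l] dp by simp
    qed
    have "measure M (BB t l \<union> BB' t l) \<le> measure M (BB t l) + measure M (BB' t l)"
      using BB_sets[OF l] by (rule measure_Un_le)
    also have "\<dots> \<le> 2 * bd"
    proof -
      have "measure M (BB t l) \<le> bd" using bound1[OF jsw l t(1) tl] mono unfolding BB_def bd_def by linarith
      moreover have "measure M (BB' t l) \<le> bd" using bound2[OF jsw l t(1) tl] mono unfolding BB'_def bd_def by linarith
      ultimately show ?thesis by linarith
    qed
    finally show ?thesis .
  qed
  have "measure M (\<Union>l\<in>{1..L}. BB t l \<union> BB' t l) \<le> (\<Sum>l\<in>{1..L}. measure M (BB t l \<union> BB' t l))"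
    using BB_sets by (intro measure_subadditive_finite) (auto simp: emeasure_eq_measure)
  also have "\<dots> \<le> (\<Sum>l\<in>{1..L}. 2 * bd)" using per by (intro sum_mono) auto
  finally show ?thesis unfolding bd_def d_def by (simp add: mult_ac)
qed

end


lemma ev_from:
  fixes Z X :: "nat \<Rightarrow> nat \<Rightarrow> real" and U Y beta :: "nat \<Rightarrow> real"
  assumes n: "1 \<le> n" and zp: "0 < zstar n Z l"
    and hyp: "\<bar>\<Sum>i\<in>{1..n}. Z l i * U i\<bar> \<le> t * sqrt (\<Sum>i\<in>{1..n}. (Z l i * U i)\<^sup>2)"
    and t: "0 \<le> t" and Q: "Qhat n K X Y beta = (1 / real n) * (\<Sum>i\<in>{1..n}. (U i)\<^sup>2)"
    and r: "r = t / sqrt (real n)"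
  shows "\<bar>(1 / real n) * (\<Sum>i\<in>{1..n}. Z l i / zstar n Z l * U i)\<bar> \<le> r * sqrt (Qhat n K X Y beta)"
proof -
  define zs where "zs = zstar n Z l"
  have npos: "0 < real n" using n by auto
  have zb: "\<bar>Z l i\<bar> \<le> zs" if "i \<in> {1..n}" for i unfolding zs_def zstar_def using that by (intro Max_ge) auto
  have "(\<Sum>i\<in>{1..n}. (Z l i * U i)\<^sup>2) \<le> (\<Sum>i\<in>{1..n}. zs\<^sup>2 * (U i)\<^sup>2)"
  proof (rule sum_mono)
    fix i assume i: "i \<in> {1..n}"
    have "(Z l i)\<^sup>2 \<le> zs\<^sup>2" using zb[OF i] by (metis abs_ge_zero order_trans power2_abs power_mono)
    then show "(Z l i * U i)\<^sup>2 \<le> zs\<^sup>2 * (U i)\<^sup>2" by (simp add: power_mult_distrib mult_right_mono)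
  qed
  then have "sqrt (\<Sum>i\<in>{1..n}. (Z l i * U i)\<^sup>2) \<le> zs * sqrt (\<Sum>i\<in>{1..n}. (U i)\<^sup>2)"
    using zp unfolding zs_def[symmetric]
    by (metis real_sqrt_le_mono real_sqrt_mult sum_distrib_left real_sqrt_abs abs_of_pos)
  then have h: "\<bar>\<Sum>i\<in>{1..n}. Z l i * U i\<bar> \<le> t * (zs * sqrt (\<Sum>i\<in>{1..n}. (U i)\<^sup>2))"
    using hyp t by (meson mult_left_mono order_trans)
  have "\<bar>(1 / real n) * (\<Sum>i\<in>{1..n}. Z l i / zstar n Z l * U i)\<bar> = \<bar>\<Sum>i\<in>{1..n}. Z l i * U i\<bar> / (real n * zs)"
    unfolding zs_def[symmetric] using zp npos
    by (simp add: sum_divide_distrib[symmetric] abs_mult abs_divide zs_def field_simps)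
  also have "\<dots> \<le> t * (zs * sqrt (\<Sum>i\<in>{1..n}. (U i)\<^sup>2)) / (real n * zs)"
    using h npos zp zs_def by (intro divide_right_mono) auto
  also have "\<dots> = t * sqrt (\<Sum>i\<in>{1..n}. (U i)\<^sup>2) / real n" using zp zs_def by simp
  also have "\<dots> = r * sqrt (Qhat n K X Y beta)"
    unfolding r Q using npos
    by (simp add: real_sqrt_mult real_sqrt_divide field_simps)
  finally show ?thesis .
qed


theorem theorem1:
  fixes M :: "'a measure"
    and n K L kend :: nat
    and y u :: "nat \<Rightarrow> 'a \<Rightarrow> real"
    and x z :: "nat \<Rightarrow> nat \<Rightarrow> 'a \<Rightarrow> real"
    and beta :: "nat \<Rightarrow> real"
    and \<delta> A A0 c r \<alpha> d :: real
  assumes P: "prob_space M"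
    and n_pos: "1 \<le> n" and L_pos: "1 \<le> L" and LK: "K \<le> L" and kend: "kend \<le> K"
    and model: "\<forall>i\<in>{1..n}. \<forall>\<omega>\<in>space M. y i \<omega> = (\<Sum>k\<in>{1..K}. x k i \<omega> * beta k) + u i \<omega>"
    and exo: "\<forall>l\<in>{1..K - kend}. \<forall>i\<in>{1..n}. \<forall>\<omega>\<in>space M. z l i \<omega> = x (kend + l) i \<omega>"
    and indep: "prob_space.indep_vars M
        (\<lambda>i. borel \<Otimes>\<^sub>M (\<Pi>\<^sub>M k\<in>{1..K}. borel) \<Otimes>\<^sub>M (\<Pi>\<^sub>M l\<in>{1..L}. borel) \<Otimes>\<^sub>M borel)
        (\<lambda>i \<omega>. (y i \<omega>, restrict (\<lambda>k. x k i \<omega>) {1..K}, restrict (\<lambda>l. z l i \<omega>) {1..L}, u i \<omega>))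
        {1..n}"
    and xstar_pos: "\<forall>\<omega>\<in>space M. \<forall>k\<in>{1..K}. 0 < xstar n (\<lambda>k i. x k i \<omega>) k"
    and zstar_pos: "\<forall>\<omega>\<in>space M. \<forall>l\<in>{1..L}. 0 < zstar n (\<lambda>l i. z l i \<omega>) l"
    and delta: "0 < \<delta>" "\<delta> \<le> 1"
    and A1_int: "\<forall>l\<in>{1..L}. \<forall>i\<in>{1..n}. integrable M (\<lambda>\<omega>. \<bar>z l i \<omega> * u i \<omega>\<bar> powr (2 + \<delta>))"
    and A1_mean: "\<forall>l\<in>{1..L}. \<forall>i\<in>{1..n}. integral\<^sup>L M (\<lambda>\<omega>. z l i \<omega> * u i \<omega>) = 0"
    and A1_nz: "\<forall>l\<in>{1..L}. \<forall>i\<in>{1..n}. \<not> (AE \<omega> in M. z l i \<omega> * u i \<omega> = 0)"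
    and A0: "0 < A0" "jsw_constant M A0"
    and A: "1 \<le> A"
    and c: "0 < c" "c < 1"
    and d_def: "d = d_ndelta M n L \<delta> z u"
    and alpha_def: "\<alpha> = 2 * real L * (1 - Phi (A * sqrt (2 * ln (real L))))
        + 2 * A0 * (1 + A * sqrt (2 * ln (real L))) powr (1 + \<delta>)
          / (real L powr (A\<^sup>2 - 1) * d powr (2 + \<delta>))"
    and r_def: "r = A * sqrt (2 * ln (real L) / real n)"
    and L_le: "real L \<le> exp (d\<^sup>2 / (2 * A\<^sup>2))"
  shows "\<exists>E\<in>sets M. measure M E \<ge> 1 - \<alpha> \<and>
    (\<forall>\<omega>\<in>E. \<forall>b s.
       stiv_solution n K L (\<lambda>k i. x k i \<omega>) (\<lambda>l i. z l i \<omega>) (\<lambda>i. y i \<omega>) r c b s \<longrightarrow>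
       (let X = (\<lambda>k i. x k i \<omega>); Z = (\<lambda>l i. z l i \<omega>); Y = (\<lambda>i. y i \<omega>);
            J = supp K beta;
            Dn = 1 - ereal r / kappa_star n K L X Z c {1..kend} J
                   - ereal (r\<^sup>2) / kappa_star n K L X Z c {kend+1..K} J;
            kJJ = kappa_star n K L X Z c J J
        in (\<forall>p::ereal. 1 \<le> p \<longrightarrow>
              ereal (lpnorm K p (\<lambda>k. xstar n X k * (b k - beta k)))
                \<le> times_posinv (ereal (2 * s * r) / kappa_p n K L X Z c p J) Dn)
         \<and> (\<forall>k\<in>{1..K}. ereal \<bar>b k - beta k\<bar>
                \<le> times_posinv (ereal (2 * s * r) / (ereal (xstar n X k) * kappa_star n K L X Z c {k} J)) Dn)
         \<and> ereal s \<le> times_posinv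
                (ereal (sqrt (Qhat n K X Y beta)) * (1 + ereal r / (ereal c * kJJ)))
                (1 - ereal r / (ereal c * kJJ))))"
proof -
  interpret S: stiv_setting M n K L y u x z \<delta>
    by (rule stiv_setting.intro[OF P n_pos L_pos indep delta A1_int A1_mean A1_nz])
  interpret prob_space M by (rule P)
  define t where "t = A * sqrt (2 * ln (real L))"
  have dp: "0 < d" unfolding d_def by (rule S.d_pos)
  have A0': "0 \<le> A0" using A0 by simp
  have Lp: "0 < real L" using L_pos by simp
  have lnL: "0 \<le> ln (real L)" using L_pos by simp
  have t0: "0 \<le> t" unfolding t_def using A lnL by simp
  have t2: "t\<^sup>2 = A\<^sup>2 * (2 * ln (real L))" unfolding t_def using lnL by (simp add: power_mult_distrib)
  have "ln (real L) \<le> d\<^sup>2 / (2 * A\<^sup>2)" using L_le Lp by (metis ln_exp ln_le_cancel_iff exp_gt_zero)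
  then have "A\<^sup>2 * (2 * ln (real L)) \<le> d\<^sup>2" using A by (simp add: field_simps)
  then have tt: "t\<^sup>2 \<le> d\<^sup>2" using t2 by simp
  then have td: "t \<le> d" using dp by (meson power2_le_imp_le less_imp_le)
  have alpha_eq: "2 * real L * (1 - Phi t + A0 * (1 + t) powr (1 + \<delta>) * exp (- t\<^sup>2 / 2) / d powr (2 + \<delta>)) = \<alpha>"
  proof -
    have e1: "exp (- t\<^sup>2 / 2) = real L powr (- (A\<^sup>2))" unfolding t2 using Lp by (simp add: powr_def)
    have e2: "real L * real L powr (- (A\<^sup>2)) = 1 / real L powr (A\<^sup>2 - 1)"
      using Lp by (simp add: powr_diff powr_minus field_simps)
    have e3: "real L * exp (- t\<^sup>2 / 2) = 1 / real L powr (A\<^sup>2 - 1)" using e1 e2 by simp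
    define G where "G = (1 + t) powr (1 + \<delta>)"
    define Dp where "Dp = d powr (2 + \<delta>)"
    define Lq where "Lq = real L powr (A\<^sup>2 - 1)"
    have "real L * (A0 * G * exp (- t\<^sup>2 / 2) / Dp) = A0 * G * (real L * exp (- t\<^sup>2 / 2)) / Dp"
      by (simp add: mult_ac)
    also have "\<dots> = A0 * G / (Lq * Dp)" unfolding e3 Lq_def by simp
    finally have k: "real L * (A0 * G * exp (- t\<^sup>2 / 2) / Dp) = A0 * G / (Lq * Dp)" .
    have "2 * real L * (1 - Phi t + A0 * G * exp (- t\<^sup>2 / 2) / Dp)
        = 2 * real L * (1 - Phi t) + 2 * (real L * (A0 * G * exp (- t\<^sup>2 / 2) / Dp))"
      by (simp add: algebra_simps)
    also have "\<dots> = 2 * real L * (1 - Phi t) + 2 * A0 * G / (Lq * Dp)" unfolding k by simp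
    finally show ?thesis unfolding alpha_def t_def[symmetric] G_def[symmetric] Dp_def[symmetric] Lq_def[symmetric] .
  qed
  note ub = S.union_bound[OF A0(2) A0' t0 td[unfolded d_def], folded d_def, unfolded alpha_eq]
  show ?thesis
  proof (cases "L = 1")
    case True
    then have tz: "t = 0" unfolding t_def by simp
    have "space M \<subseteq> (\<Union>l\<in>{1..L}. S.BB t l \<union> S.BB' t l)"
    proof
      fix \<omega> assume w: "\<omega> \<in> space M"
      define q where "q = (\<Sum>i\<in>{1..n}. z 1 i \<omega> * u i \<omega>) / sqrt (\<Sum>i\<in>{1..n}. (z 1 i \<omega> * u i \<omega>)\<^sup>2)"
      have "(\<Sum>i\<in>{1..n}. - (z 1 i \<omega> * u i \<omega>)) / sqrt (\<Sum>i\<in>{1..n}. (- (z 1 i \<omega> * u i \<omega>))\<^sup>2) = - q"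
        unfolding q_def by (simp add: sum_negf)
      then have b2: "\<omega> \<in> S.BB' t 1 \<longleftrightarrow> 0 \<le> - q" unfolding S.BB'_def tz using w by simp
      have b1: "\<omega> \<in> S.BB t 1 \<longleftrightarrow> 0 \<le> q" unfolding S.BB_def tz q_def using w by simp
      have "\<omega> \<in> S.BB t 1 \<or> \<omega> \<in> S.BB' t 1" unfolding b1 b2 by linarith
      then show "\<omega> \<in> (\<Union>l\<in>{1..L}. S.BB t l \<union> S.BB' t l)" using True by auto
    qed
    then have "measure M (space M) \<le> measure M (\<Union>l\<in>{1..L}. S.BB t l \<union> S.BB' t l)"
      using S.BB_sets by (intro finite_measure_mono) auto
    then have "1 \<le> \<alpha>" using ub prob_space by simp
    then show ?thesis by (intro bexI[of _ "{}"]) auto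
  next
    case False
    then have L2: "2 \<le> L" using L_pos by simp
    have lnp: "0 < ln (real L)" using L2 by simp
    have npos: "0 < real n" using n_pos by simp
    have r_eq: "r = t / sqrt (real n)" unfolding r_def t_def by (simp add: real_sqrt_divide)
    have rp: "0 < r" unfolding r_eq t_def using A lnp npos by simp
    have r1: "r \<le> 1"
    proof -
      have "d \<le> S.dl 1" unfolding d_def using L_pos by (intro S.d_le) auto
      then have "d\<^sup>2 \<le> (S.dl 1)\<^sup>2" using dp by (intro power_mono) auto
      also have "\<dots> \<le> real n" using L_pos by (intro S.dl_sq) auto
      finally have "r\<^sup>2 \<le> 1" unfolding r_eq using tt npos by (simp add: power_divide)
      then show ?thesis using rp by (simp add: power_le_one_iff abs_le_iff)
    qed
    define E where "E = {\<omega> \<in> space M. \<forall>l\<in>{1..L}. \<bar>\<Sum>i\<in>{1..n}. z l i \<omega> * u i \<omega>\<bar> \<le> t * sqrt (\<Sum>i\<in>{1..n}. (z l i \<omega> * u i \<omega>)\<^sup>2)}"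
    have Esets: "E \<in> sets M"
      unfolding E_def
    proof (intro sets.sets_Collect_finite_All)
      fix l assume l: "l \<in> {1..L}"
      note m1 = S.measS[OF l] and m2 = S.measV[OF l]
      show "{\<omega> \<in> space M. \<bar>\<Sum>i\<in>{1..n}. z l i \<omega> * u i \<omega>\<bar> \<le> t * sqrt (\<Sum>i\<in>{1..n}. (z l i \<omega> * u i \<omega>)\<^sup>2)} \<in> sets M"
        using m1 m2 by measurable
    qed auto
    have sub: "space M - E \<subseteq> (\<Union>l\<in>{1..L}. S.BB t l \<union> S.BB' t l)"
    proof
      fix \<omega> assume w: "\<omega> \<in> space M - E"
      then obtain l where l: "l \<in> {1..L}" and gt: "\<bar>\<Sum>i\<in>{1..n}. z l i \<omega> * u i \<omega>\<bar> > t * sqrt (\<Sum>i\<in>{1..n}. (z l i \<omega> * u i \<omega>)\<^sup>2)"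
        unfolding E_def by auto
      define Sx where "Sx = (\<Sum>i\<in>{1..n}. z l i \<omega> * u i \<omega>)"
      define Vx where "Vx = sqrt (\<Sum>i\<in>{1..n}. (z l i \<omega> * u i \<omega>)\<^sup>2)"
      have Vp: "0 < Vx"
      proof (rule ccontr)
        assume "\<not> 0 < Vx"
        moreover have "0 \<le> (\<Sum>i\<in>{1..n}. (z l i \<omega> * u i \<omega>)\<^sup>2)" by (simp add: sum_nonneg)
        ultimately have "(\<Sum>i\<in>{1..n}. (z l i \<omega> * u i \<omega>)\<^sup>2) = 0" unfolding Vx_def
          by simp
        then have "\<forall>i\<in>{1..n}. (z l i \<omega> * u i \<omega>)\<^sup>2 = 0" by (subst (asm) sum_nonneg_eq_0_iff) auto
        then have "Sx = 0" unfolding Sx_def by (intro sum.neutral) auto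
        moreover have "0 \<le> Vx" unfolding Vx_def by (simp add: sum_nonneg)
        ultimately show False using gt t0 unfolding Sx_def[symmetric] Vx_def[symmetric]
          by (smt (verit) mult_nonneg_nonneg)
      qed
      have gt': "t * Vx < \<bar>Sx\<bar>" using gt unfolding Sx_def Vx_def .
      have "t \<le> Sx / Vx \<or> t \<le> - (Sx / Vx)"
        using gt' Vp by (cases "0 \<le> Sx") (auto simp: field_simps)
      moreover have "(\<Sum>i\<in>{1..n}. - (z l i \<omega> * u i \<omega>)) / sqrt (\<Sum>i\<in>{1..n}. (- (z l i \<omega> * u i \<omega>))\<^sup>2) = - (Sx / Vx)"
        unfolding Sx_def Vx_def by (simp add: sum_negf)
      moreover have "\<omega> \<in> S.BB t l \<longleftrightarrow> t \<le> Sx / Vx" unfolding S.BB_def Sx_def Vx_def using w by simp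
      moreover have "\<omega> \<in> S.BB' t l \<longleftrightarrow> t \<le> (\<Sum>i\<in>{1..n}. - (z l i \<omega> * u i \<omega>)) / sqrt (\<Sum>i\<in>{1..n}. (- (z l i \<omega> * u i \<omega>))\<^sup>2)"
        unfolding S.BB'_def using w by simp
      ultimately have "\<omega> \<in> S.BB t l \<or> \<omega> \<in> S.BB' t l" by argo
      then show "\<omega> \<in> (\<Union>l\<in>{1..L}. S.BB t l \<union> S.BB' t l)" using l by auto
    qed
    have "measure M (space M - E) \<le> measure M (\<Union>l\<in>{1..L}. S.BB t l \<union> S.BB' t l)"
      using sub S.BB_sets by (intro finite_measure_mono) auto
    then have "measure M (space M - E) \<le> \<alpha>" using ub by simp
    then have mE: "1 - \<alpha> \<le> measure M E" using prob_compl[OF Esets] by simp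
    show ?thesis
    proof (intro bexI[of _ E] conjI ballI allI impI)
      show "E \<in> sets M" by (rule Esets)
      show "1 - \<alpha> \<le> measure M E" by (rule mE)
    next
      fix \<omega> b s assume w: "\<omega> \<in> E"
        and sol: "stiv_solution n K L (\<lambda>k i. x k i \<omega>) (\<lambda>l i. z l i \<omega>) (\<lambda>i. y i \<omega>) r c b s"
      have ws: "\<omega> \<in> space M" using w unfolding E_def by auto
      have model': "\<forall>i\<in>{1..n}. y i \<omega> = (\<Sum>k\<in>{1..K}. x k i \<omega> * beta k) + u i \<omega>" using model ws by auto
      have Q: "Qhat n K (\<lambda>k i. x k i \<omega>) (\<lambda>i. y i \<omega>) beta = (1 / real n) * (\<Sum>i\<in>{1..n}. (u i \<omega>)\<^sup>2)"
        unfolding Qhat_def using model' by (auto intro!: sum.cong arg_cong[where f="\<lambda>v. _ * v"])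
      have ev: "\<forall>l\<in>{1..L}. \<bar>(1 / real n) * (\<Sum>i\<in>{1..n}. z l i \<omega> / zstar n (\<lambda>l i. z l i \<omega>) l * u i \<omega>)\<bar>
               \<le> r * sqrt (Qhat n K (\<lambda>k i. x k i \<omega>) (\<lambda>i. y i \<omega>) beta)"
      proof
        fix l assume l: "l \<in> {1..L}"
        have "\<bar>\<Sum>i\<in>{1..n}. z l i \<omega> * u i \<omega>\<bar> \<le> t * sqrt (\<Sum>i\<in>{1..n}. (z l i \<omega> * u i \<omega>)\<^sup>2)"
          using w l unfolding E_def by auto
        then show "\<bar>(1 / real n) * (\<Sum>i\<in>{1..n}. z l i \<omega> / zstar n (\<lambda>l i. z l i \<omega>) l * u i \<omega>)\<bar>
               \<le> r * sqrt (Qhat n K (\<lambda>k i. x k i \<omega>) (\<lambda>i. y i \<omega>) beta)"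
          using ev_from[of n "\<lambda>l i. z l i \<omega>" l "\<lambda>i. u i \<omega>" t K "\<lambda>k i. x k i \<omega>" "\<lambda>i. y i \<omega>" beta r]
            n_pos zstar_pos ws l t0 Q r_eq by auto
      qed
      show "let X = (\<lambda>k i. x k i \<omega>); Z = (\<lambda>l i. z l i \<omega>); Y = (\<lambda>i. y i \<omega>);
            J = supp K beta;
            Dn = 1 - ereal r / kappa_star n K L X Z c {1..kend} J
                   - ereal (r\<^sup>2) / kappa_star n K L X Z c {kend+1..K} J;
            kJJ = kappa_star n K L X Z c J J
        in (\<forall>p::ereal. 1 \<le> p \<longrightarrow>
              ereal (lpnorm K p (\<lambda>k. xstar n X k * (b k - beta k)))
                \<le> times_posinv (ereal (2 * s * r) / kappa_p n K L X Z c p J) Dn)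
         \<and> (\<forall>k\<in>{1..K}. ereal \<bar>b k - beta k\<bar>
                \<le> times_posinv (ereal (2 * s * r) / (ereal (xstar n X k) * kappa_star n K L X Z c {k} J)) Dn)
         \<and> ereal s \<le> times_posinv
                (ereal (sqrt (Qhat n K X Y beta)) * (1 + ereal r / (ereal c * kJJ)))
                (1 - ereal r / (ereal c * kJJ))"
        using det_final[of n K L kend "\<lambda>i. y i \<omega>" "\<lambda>k i. x k i \<omega>" beta "\<lambda>i. u i \<omega>" "\<lambda>l i. z l i \<omega>" c r b s]
          n_pos LK kend model' exo ws xstar_pos zstar_pos c rp r1 ev sol
        unfolding Let_def by auto
    qed
  qed
qed

end
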